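(* Let $N$ be a positive integer and let $\mathbf K_1\in\mathbb C^{N\times N}$ be an invertible constant matrix such that $\mathbf K_1$ and $-(\mathbf K_1^* )^{-1}$ have no eigenvalue in common. Let $\xi_n,\eta_n$ ($n=1,2,\dots$) be real independent variables, $z_n=\xi_n+\mathrm i\eta_n$, $\bar z_n=z_n^*=\xi_n-\mathrm i\eta_n$. Let $\mathbf r_1,\mathbf s_1\in\mathbb C^N$ (column vectors) and $\mathbf M_1\in\mathbb C^{N\times N}$ be functions of these variables satisfying, for $n=1,2,\dots$, $$\mathbf K_1\mathbf M_1+\mathbf M_1(\mathbf K_1^* )^{-1}=-\mathbf r_1\mathbf s_1^\dagger(\mathbf K_1^* )^{-1},$$ $$\partial_{\xi_n}\mathbf r_1=(\mathbf K_1^n+(-1)^{n+1}\mathbf K_1^{-n})\mathbf r_1,\quad \partial_{\eta_n}\mathbf r_1=\mathrm i(\mathbf K_1^n-(-1)^{n+1}\mathbf K_1^{-n})\mathbf r_1,$$ $$\partial_{\xi_n}\mathbf s_1=((\mathbf K_1^T)^n+(-1)^{n+1}(\mathbf K_1^T)^{-n})\mathbf s_1,\quad \partial_{\eta_n}\mathbf s_1=\mathrm i((\mathbf K_1^T)^n-(-1)^{n+1}(\mathbf K_1^T)^{-n})\mathbf s_1.$$ On the domain where $\mathbf I_N-\mathbf M_1^*\mathbf M_1$ is invertible, define $$s_1^{(-1,0)}=\mathbf s_1^\dagger(\mathbf K_1^* )^{-1}(\mathbf I_N-\mathbf M_1^*\mathbf M_1)^{-1}\mathbf M_1^*\mathbf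 K_1^{-1}\mathbf r_1,\quad s_3^{(-1,0)}=\mathbf s_1^T(\mathbf I_N-\mathbf M_1\mathbf M_1^* )^{-1}\mathbf K_1^{-1}\mathbf r_1,$$ $$s_4^{(-1,0)}=\mathbf s_1^T\mathbf M_1(\mathbf I_N-\mathbf M_1^*\mathbf M_1)^{-1}\mathbf r_1^*,$$ and $$\mathbf v=\begin{pmatrix}1-s_1^{(-1,0)}&-(s_3^{(-1,0)})^*\\ -s_3^{(-1,0)}&1-s_4^{(-1,0)}\end{pmatrix}.$$ Then $\mathbf v$ solves the self-dual Yang--Mills equation $$(\mathbf v_{z_{n+1}}\mathbf v^{-1})_{\bar z_{n+1}}+(\mathbf v_{\bar z_n}\mathbf v^{-1})_{z_n}=0,\qquad n=1,2,\dots,$$ and $\mathbf v=\mathbf v^\dagger$, $\det\mathbf v=1$; consequently at each point $\mathbf v$ is either positive definite or negative definite.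
   Context: $^*$ denotes entrywise complex conjugation, $^T$ transpose, $^\dagger$ conjugate transpose, $\mathbf I_N$ the $N\times N$ identity. Derivatives with respect to $z_n,\bar z_n$ are the Wirtinger-type derivatives $\partial_{z_n}=\tfrac12(\partial_{\xi_n}-\mathrm i\partial_{\eta_n})$, $\partial_{\bar z_n}=\tfrac12(\partial_{\xi_n}+\mathrm i\partial_{\eta_n})$ (so that $\partial_{\xi_n}=\partial_{z_n}+\partial_{\bar z_n}$, $\partial_{\eta_n}=\mathrm i(\partial_{z_n}-\partial_{\bar z_n})$); subscripts denote partial derivatives. *)

theory Defs
  imports "HOL-Analysis.Analysis"
begin

text \<open>Complex matrices are of type complex^'n^'n (N = CARD('n)), column vectors complex^'n.
  A point of the variable space is a pair of sequences xi, eta :: nat => real;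
  only indices n >= 1 are used (paper's indexing).\<close>

definition mconj :: "complex^'m^'n \<Rightarrow> complex^'m^'n" where
  "mconj A = (\<chi> i j. cnj (A $ i $ j))"

definition vconj :: "complex^'n \<Rightarrow> complex^'n" where
  "vconj x = (\<chi> i. cnj (x $ i))"

definition adj :: "complex^'m^'n \<Rightarrow> complex^'n^'m" where
  "adj A = transpose (mconj A)"

definition msmult :: "complex \<Rightarrow> complex^'m^'n \<Rightarrow> complex^'m^'n" where
  "msmult c A = (\<chi> i j. c * A $ i $ j)"

definition mpow :: "complex^'n^'n \<Rightarrow> nat \<Rightarrow> complex^'n^'n" where
  "mpow A k = (((**) A) ^^ k) (mat 1)"

definition bil :: "complex^'n \<Rightarrow> complex^'n \<Rightarrow> complex" where
  "bil x y = (\<Sum>i\<in>UNIV. x $ i * y $ i)"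

definition outer :: "complex^'n \<Rightarrow> complex^'n \<Rightarrow> complex^'n^'n" where
  "outer x y = (\<chi> i j. x $ i * y $ j)"

definition is_eigenvalue :: "complex^'n^'n \<Rightarrow> complex \<Rightarrow> bool" where
  "is_eigenvalue A \<mu> \<longleftrightarrow> (\<exists>x. x \<noteq> 0 \<and> A *v x = \<mu> *s x)"

definition pos_def :: "complex^'n^'n \<Rightarrow> bool" where
  "pos_def A \<longleftrightarrow> (\<forall>x. x \<noteq> 0 \<longrightarrow>
     Im (bil (vconj x) (A *v x)) = 0 \<and> Re (bil (vconj x) (A *v x)) > 0)"

definition neg_def :: "complex^'n^'n \<Rightarrow> bool" where
  "neg_def A \<longleftrightarrow> (\<forall>x. x \<noteq> 0 \<longrightarrow>
     Im (bil (vconj x) (A *v x)) = 0 \<and> Re (bil (vconj x) (A *v x)) < 0)"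

definition dxi :: "nat \<Rightarrow> ((nat \<Rightarrow> real) \<Rightarrow> (nat \<Rightarrow> real) \<Rightarrow> 'a::real_normed_vector)
                     \<Rightarrow> (nat \<Rightarrow> real) \<Rightarrow> (nat \<Rightarrow> real) \<Rightarrow> 'a" where
  "dxi n F xi eta = vector_derivative (\<lambda>t. F (xi(n := t)) eta) (at (xi n))"

definition deta :: "nat \<Rightarrow> ((nat \<Rightarrow> real) \<Rightarrow> (nat \<Rightarrow> real) \<Rightarrow> 'a::real_normed_vector)
                     \<Rightarrow> (nat \<Rightarrow> real) \<Rightarrow> (nat \<Rightarrow> real) \<Rightarrow> 'a" where
  "deta n F xi eta = vector_derivative (\<lambda>t. F xi (eta(n := t))) (at (eta n))"

definition pdiff :: "nat \<Rightarrow> ((nat \<Rightarrow> real) \<Rightarrow> (nat \<Rightarrow> real) \<Rightarrow> 'a::real_normed_vector)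
                     \<Rightarrow> (nat \<Rightarrow> real) \<Rightarrow> (nat \<Rightarrow> real) \<Rightarrow> bool" where
  "pdiff n F xi eta \<longleftrightarrow> (\<lambda>t. F (xi(n := t)) eta) differentiable (at (xi n))
                       \<and> (\<lambda>t. F xi (eta(n := t))) differentiable (at (eta n))"

definition dz :: "nat \<Rightarrow> ((nat \<Rightarrow> real) \<Rightarrow> (nat \<Rightarrow> real) \<Rightarrow> complex^'m^'n)
                     \<Rightarrow> (nat \<Rightarrow> real) \<Rightarrow> (nat \<Rightarrow> real) \<Rightarrow> complex^'m^'n" where
  "dz n F xi eta = msmult (1/2) (dxi n F xi eta - msmult \<i> (deta n F xi eta))"

definition dzb :: "nat \<Rightarrow> ((nat \<Rightarrow> real) \<Rightarrow> (nat \<Rightarrow> real) \<Rightarrow> complex^'m^'n)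
                     \<Rightarrow> (nat \<Rightarrow> real) \<Rightarrow> (nat \<Rightarrow> real) \<Rightarrow> complex^'m^'n" where
  "dzb n F xi eta = msmult (1/2) (dxi n F xi eta + msmult \<i> (deta n F xi eta))"

definition s1_val :: "complex^'n^'n \<Rightarrow> complex^'n \<Rightarrow> complex^'n \<Rightarrow> complex^'n^'n \<Rightarrow> complex" where
  "s1_val K r s M = bil (vconj s) ((matrix_inv (mconj K) ** matrix_inv (mat 1 - mconj M ** M)
                        ** mconj M ** matrix_inv K) *v r)"

definition s3_val :: "complex^'n^'n \<Rightarrow> complex^'n \<Rightarrow> complex^'n \<Rightarrow> complex^'n^'n \<Rightarrow> complex" where
  "s3_val K r s M = bil s ((matrix_inv (mat 1 - M ** mconj M) ** matrix_inv K) *v r)"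

definition s4_val :: "complex^'n^'n \<Rightarrow> complex^'n \<Rightarrow> complex^'n \<Rightarrow> complex^'n^'n \<Rightarrow> complex" where
  "s4_val K r s M = bil s ((M ** matrix_inv (mat 1 - mconj M ** M)) *v vconj r)"

definition vmat :: "complex^'n^'n \<Rightarrow> complex^'n \<Rightarrow> complex^'n \<Rightarrow> complex^'n^'n \<Rightarrow> complex^2^2" where
  "vmat K r s M = vector [vector [1 - s1_val K r s M, - cnj (s3_val K r s M)],
                          vector [- s3_val K r s M, 1 - s4_val K r s M]]"

end

theory Submission
  imports Defs "HOL-Computational_Algebra.Fundamental_Theorem_Algebra"
begin

lemma mm_add_rdistrib: "((A::'a::semiring_1^'n^'m) + B) ** C = A ** C + B ** C"
  by (vector matrix_matrix_mult_def sum.distrib[symmetric] field_simps)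

lemma mm_diff_ldistrib: "(A::'a::ring_1^'n^'m) ** (B - C) = A ** B - A ** C"
  by (vector matrix_matrix_mult_def sum_subtractf[symmetric] field_simps)

lemma mm_diff_rdistrib: "((A::'a::ring_1^'n^'m) - B) ** C = A ** C - B ** C"
  by (vector matrix_matrix_mult_def sum_subtractf[symmetric] field_simps)

lemma mm_uminus_left: "(- (A::'a::ring_1^'n^'m)) ** B = - (A ** B)"
  by (vector matrix_matrix_mult_def sum_negf[symmetric])

lemma mm_uminus_right: "(A::'a::ring_1^'n^'m) ** (- B) = - (A ** B)"
  by (vector matrix_matrix_mult_def sum_negf[symmetric])

lemma mat_add: "mat (a + b) = (mat a + mat b :: 'a::monoid_add^'n^'n)"
  by (vector mat_def)

lemma mat_mult_left: "mat (c::complex) ** A = msmult c A"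
  by (simp add: msmult_def vec_eq_iff matrix_matrix_mult_def mat_def if_distrib if_distribR
      sum.delta cong: if_cong)

lemma mat_mult_right: "(A::complex^'n^'m) ** mat c = msmult c A"
  by (simp add: msmult_def vec_eq_iff matrix_matrix_mult_def mat_def if_distrib if_distribR
      sum.delta' mult.commute cong: if_cong)

lemma mat_mult_vec: "mat (c::complex) *v x = c *s x"
  by (simp add: vec_eq_iff matrix_vector_mult_def mat_def if_distrib if_distribR
      sum.delta cong: if_cong)

lemma msmult_mult_left: "msmult c (A ** B) = msmult c A ** B"
  by (simp add: msmult_def vec_eq_iff matrix_matrix_mult_def sum_distrib_left mult.assoc)

lemma msmult_mult_right: "msmult c (A ** B) = A ** msmult c B"
  by (simp add: msmult_def vec_eq_iff matrix_matrix_mult_def sum_distrib_left mult.left_commute)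

lemma msmult_add: "msmult c (A + B) = msmult c A + msmult c B"
  by (simp add: msmult_def vec_eq_iff algebra_simps)

lemma msmult_diff: "msmult c (A - B) = msmult c A - msmult c B"
  by (simp add: msmult_def vec_eq_iff algebra_simps)

lemma msmult_add_scalar: "msmult (a + b) A = msmult a A + msmult b A"
  by (simp add: msmult_def vec_eq_iff algebra_simps)

lemma msmult_msmult: "msmult a (msmult b A) = msmult (a * b) A"
  by (simp add: msmult_def vec_eq_iff algebra_simps)

lemma msmult_1[simp]: "msmult 1 A = A"
  by (simp add: msmult_def vec_eq_iff)

lemma msmult_0[simp]: "msmult 0 A = 0" "msmult c 0 = 0"
  by (simp_all add: msmult_def vec_eq_iff)

lemma msmult_vec: "msmult c A *v x = c *s (A *v x)"
  by (simp add: msmult_def vec_eq_iff matrix_vector_mult_def sum_distrib_left mult.assoc)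

lemma msmult_mat: "msmult c (mat a) = mat (c * a)"
  by (simp add: msmult_def vec_eq_iff mat_def)

lemma mpow_Suc: "mpow A (Suc k) = A ** mpow A k"
  by (simp add: mpow_def)

lemma mpow_0[simp]: "mpow A 0 = mat 1"
  by (simp add: mpow_def)

lemma matrix_vector_mult_sum:
  "(\<Sum>i\<in>S. B i) *v (w::'a::comm_semiring_1^'n) = (\<Sum>i\<in>S. B i *v w)"
  by (induction S rule: infinite_finite_induct) (auto simp: matrix_vector_mult_add_rdistrib)

section \<open>Polynomial evaluation at matrices\<close>

definition peval :: "complex poly \<Rightarrow> complex^'n^'n \<Rightarrow> complex^'n^'n" where
  "peval p A = fold_coeffs (\<lambda>a B. mat a + A ** B) p 0"

lemma peval_0[simp]: "peval 0 A = 0"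
  by (simp add: peval_def)

lemma peval_pCons[simp]: "peval (pCons a p) A = mat a + A ** peval p A"
  by (cases "p = 0 \<and> a = 0") (auto simp: peval_def)

lemma peval_add: "peval (p + q) A = peval p A + peval q A"
proof (induction p arbitrary: q)
  case 0 then show ?case by simp
next
  case (pCons a p)
  then show ?case by (cases q) (simp add: matrix_add_ldistrib mat_add algebra_simps)
qed

lemma peval_smult: "peval (smult c p) A = msmult c (peval p A)"
  by (induction p) (simp_all add: msmult_add msmult_mat msmult_mult_right)

lemma peval_mult: "peval (p * q) A = peval p A ** peval q A"
proof (induction p)
  case 0 then show ?case by simp
next
  case (pCons a p)
  then show ?case
    by (simp add: peval_add peval_smult mm_add_rdistrib mat_mult_left matrix_mul_assoc)
qed

lemma peval_monom: "peval (monom c n) A = msmult c (mpow A n)"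
proof (induction n)
  case 0 then show ?case by (simp add: monom_0 msmult_mat)
next
  case (Suc n)
  have "peval (monom c (Suc n)) A = peval (pCons 0 (monom c n)) A" by (simp only: monom_Suc)
  also have "\<dots> = A ** peval (monom c n) A" by (simp only: peval_pCons mat_0 add_0_left)
  finally show ?case using Suc by (simp add: mpow_Suc msmult_mult_right)
qed

lemma peval_sum: "peval (\<Sum>i\<in>S. f i) A = (\<Sum>i\<in>S. peval (f i) A)"
  by (induction S rule: infinite_finite_induct) (auto simp: peval_add)

lemma peval_linear: "peval [:-m, 1:] A = A - mat m"
proof -
  have "peval [:-m, 1:] A = mat (-m) + A" by simp
  then show ?thesis by (simp add: vec_eq_iff mat_def)
qed

lemma krylov:
  fixes P :: "complex^'n^'n"
  shows "\<exists>p. p \<noteq> 0 \<and> peval p P *v w = 0"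
proof (cases "inj_on (\<lambda>i. mpow P i *v w) {0..CARD('n)}")
  case False
  then obtain i j where ij: "i \<noteq> j" "mpow P i *v w = mpow P j *v w"
    unfolding inj_on_def by blast
  define p where "p = monom (1::complex) i + monom (-1) j"
  have "coeff p i = 1" using ij by (simp add: p_def coeff_monom)
  then have "p \<noteq> 0" by auto
  moreover have "peval p P *v w = 0"
    using ij by (simp add: p_def peval_add peval_monom matrix_vector_mult_add_rdistrib msmult_vec)
  ultimately show ?thesis by blast
next
  case True
  let ?vs = "\<lambda>i. mpow P i *v w"
  let ?S = "?vs ` {0..CARD('n)}"
  have cS: "card ?S = Suc CARD('n)"
    using True by (simp add: card_image)
  have "\<not> vec.independent ?S"
  proof
    assume "vec.independent ?S"
    then have "card ?S \<le> vec.dim (UNIV :: (complex^'n) set)"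
      by (intro vec.independent_card_le_dim) auto
    also have "\<dots> = CARD('n)"
      by (simp add: vec.dim_UNIV card_cart_basis)
    finally show False using cS by simp
  qed
  then obtain u v0 where uv: "v0 \<in> ?S" "u v0 \<noteq> 0" "(\<Sum>v\<in>?S. u v *s v) = 0"
    using vec.dependent_finite[of ?S] by auto
  then obtain i0 where i0: "i0 \<in> {0..CARD('n)}" "v0 = ?vs i0" by blast
  have sum0: "(\<Sum>i\<in>{0..CARD('n)}. u (?vs i) *s ?vs i) = 0"
    using uv(3) by (simp add: sum.reindex[OF True])
  define p where "p = (\<Sum>i\<in>{0..CARD('n)}. monom (u (?vs i)) i)"
  have "coeff p i0 = u (?vs i0)"
    using i0 by (simp add: p_def coeff_sum coeff_monom)
  then have "p \<noteq> 0" using uv i0 by auto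
  moreover have "peval p P *v w = 0"
    using sum0 by (simp add: p_def peval_sum peval_monom matrix_vector_mult_sum msmult_vec)
  ultimately show ?thesis by blast
qed

lemma not_eig_inj:
  assumes "\<not> is_eigenvalue (A::complex^'n^'n) \<mu>" and "A *v y = \<mu> *s y"
  shows "y = 0"
  using assms unfolding is_eigenvalue_def by blast

lemma sylvester_kernel:
  fixes K P X :: "complex^'n^'n"
  assumes KX: "K ** X = X ** P"
    and spec: "\<not> (\<exists>\<mu>. is_eigenvalue K \<mu> \<and> is_eigenvalue P \<mu>)"
  shows "X = 0"
proof -
  have main: "X *v w = 0" if "p \<noteq> 0" "peval p P *v w = 0" for p w
    using that
  proof (induction "degree p" arbitrary: p w rule: less_induct)
    case less
    show ?case
    proof (cases "degree p = 0")
      case True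
      then obtain c where p: "p = pCons c 0" by (rule degree_eq_zeroE)
      with less.prems have "c \<noteq> 0" by auto
      from less.prems(2) p have "c *s w = 0" by (simp add: mat_mult_vec)
      with \<open>c \<noteq> 0\<close> have "w = 0" by (simp add: vec_eq_iff)
      then show "X *v w = 0" by simp
    next
      case False
      then have "\<not> constant (poly p)" by (simp add: constant_degree)
      then obtain \<mu> where "poly p \<mu> = 0" using fundamental_theorem_of_algebra by blast
      then have "[:-\<mu>, 1:] dvd p" by (simp add: poly_eq_0_iff_dvd)
      then obtain q where pq: "p = [:-\<mu>, 1:] * q" by (rule dvdE)
      with less.prems have q0: "q \<noteq> 0" by auto
      have "degree ([:-\<mu>, 1:] * q) = degree [:-\<mu>, 1:] + degree q"
        by (rule degree_mult_eq) (use q0 in auto)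
      then have dq: "degree q < degree p" using pq by (simp del: mult_pCons_left)
      let ?D = "P - mat \<mu>"
      have XD: "X ** ?D = (K - mat \<mu>) ** X"
        by (simp only: mm_diff_ldistrib mm_diff_rdistrib KX mat_mult_left mat_mult_right)
      have w: "peval p P *v w = 0" by (fact less.prems(2))
      show "X *v w = 0"
      proof (cases "is_eigenvalue P \<mu>")
        case True
        with spec have nK: "\<not> is_eigenvalue K \<mu>" by blast
        have "p = q * [:-\<mu>, 1:]" using pq by (metis mult.commute)
        then have pe: "peval p P = peval q P ** ?D" by (simp only: peval_mult peval_linear)
        have "peval q P *v (?D *v w) = 0"
          using w pe by (simp add: matrix_vector_mul_assoc)
        then have "X *v (?D *v w) = 0" using less.hyps[OF dq q0] by blast
        then have "(K - mat \<mu>) *v (X *v w) = 0"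
          by (simp add: matrix_vector_mul_assoc XD)
        then have "K *v (X *v w) = \<mu> *s (X *v w)"
          by (simp add: matrix_vector_mult_diff_rdistrib mat_mult_vec)
        then show ?thesis using not_eig_inj[OF nK] by blast
      next
        case False
        have pe: "peval p P = ?D ** peval q P" using pq by (simp only: peval_mult peval_linear)
        have "?D *v (peval q P *v w) = 0"
          using w pe by (simp add: matrix_vector_mul_assoc)
        then have "P *v (peval q P *v w) = \<mu> *s (peval q P *v w)"
          by (simp add: matrix_vector_mult_diff_rdistrib mat_mult_vec)
        then have "peval q P *v w = 0" using not_eig_inj[OF False] by blast
        then show ?thesis using less.hyps[OF dq q0] by blast
      qed
    qed
  qed
  have "\<And>w. X *v w = 0"
  proof -
    fix w :: "complex^'n"
    obtain p where "p \<noteq> 0" "peval p P *v w = 0" using krylov by blast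
    then show "X *v w = 0" using main by blast
  qed
  then show ?thesis by (simp add: matrix_eq)
qed


lemma minv: "invertible A \<Longrightarrow> A ** matrix_inv A = mat 1 \<and> matrix_inv A ** A = mat 1"
  unfolding matrix_inv_def invertible_def by (rule someI_ex)

lemma minv_right: "invertible A \<Longrightarrow> A ** matrix_inv A = mat 1"
  using minv by blast

lemma minv_left: "invertible A \<Longrightarrow> matrix_inv A ** A = mat 1"
  using minv by blast

lemma minv_unique:
  fixes A B :: "'a::field^'n^'n"
  assumes "A ** B = mat 1" shows "matrix_inv A = B"
proof -
  have inv: "invertible A" using assms invertible_right_inverse by blast
  have "matrix_inv A = matrix_inv A ** (A ** B)" using assms by simp
  also have "\<dots> = B" using minv_left[OF inv] by (simp add: matrix_mul_assoc)
  finally show ?thesis .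
qed

lemma minv_unique_left:
  fixes A B :: "'a::field^'n^'n"
  assumes "B ** A = mat 1" shows "matrix_inv A = B"
  using assms matrix_left_right_inverse minv_unique by blast

lemma invertible_iff_right:
  fixes A B :: "'a::field^'n^'n"
  assumes "A ** B = mat 1" shows "invertible A"
  using assms invertible_right_inverse by blast

lemma minv_vec_entry:
  fixes A :: "'a::field^'n^'n"
  assumes "invertible A"
  shows "matrix_inv A $ i $ j =
    det (\<chi> k l. if l = i then (if k = j then 1 else 0) else A $ k $ l) / det A"
proof -
  let ?b = "(\<chi> k. if k = j then 1 else 0) :: 'a^'n"
  let ?x = "matrix_inv A *v ?b"
  have d0: "det A \<noteq> 0" using assms invertible_det_nz by blast
  have "A *v ?x = ?b" using minv_right[OF assms] by (simp add: matrix_vector_mul_assoc)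
  then have "?x = (\<chi> k. det(\<chi> i j. if j=k then ?b$i else A$i$j) / det A)"
    using cramer[OF d0] by blast
  then have 1: "?x $ i = det(\<chi> k l. if l=i then ?b$k else A$k$l) / det A" by simp
  have 2: "(\<chi> k l. if l=i then ?b$k else A$k$l) = (\<chi> k l. if l = i then (if k = j then 1 else 0) else A $ k $ l)"
    by (simp add: vec_eq_iff)
  have 3: "?x $ i = matrix_inv A $ i $ j"
    by (simp add: matrix_vector_mult_def if_distrib if_distribR sum.delta' cong: if_cong)
  show ?thesis using 1 2 3 by simp
qed

section \<open>Bilinearity and derivatives\<close>

lemma bb_mm: "bounded_bilinear (\<lambda>(A::complex^'n^'m) (B::complex^'p^'n). A ** B)"
proof -
  have "bilinear (\<lambda>(A::complex^'n^'m) (B::complex^'p^'n). A ** B)"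
    unfolding bilinear_def
    by (auto intro!: linearI simp: matrix_add_ldistrib mm_add_rdistrib matrix_scalar_ac
        scalar_matrix_assoc[symmetric])
  then show ?thesis by (simp add: bilinear_conv_bounded_bilinear)
qed

lemma hvd_mm:
  fixes F :: "real \<Rightarrow> complex^'n^'m" and H :: "real \<Rightarrow> complex^'p^'n"
  assumes "(F has_vector_derivative F') (at t)" "(H has_vector_derivative H') (at t)"
  shows "((\<lambda>x. F x ** H x) has_vector_derivative (F t ** H' + F' ** H t)) (at t)"
  by (rule bounded_bilinear.has_vector_derivative[OF bb_mm assms])

lemma bl_mconj: "bounded_linear (mconj :: complex^'m^'n \<Rightarrow> complex^'m^'n)"
proof -
  have "linear (mconj :: complex^'m^'n \<Rightarrow> complex^'m^'n)"
    by (auto intro!: linearI simp: mconj_def vec_eq_iff)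
  then show ?thesis by (simp add: linear_conv_bounded_linear)
qed

lemma bl_vconj: "bounded_linear (vconj :: complex^'n \<Rightarrow> complex^'n)"
proof -
  have "linear (vconj :: complex^'n \<Rightarrow> complex^'n)"
    by (auto intro!: linearI simp: vconj_def vec_eq_iff)
  then show ?thesis by (simp add: linear_conv_bounded_linear)
qed

lemma bl_msmult: "bounded_linear (msmult c :: complex^'m^'n \<Rightarrow> complex^'m^'n)"
proof -
  have "linear (msmult c :: complex^'m^'n \<Rightarrow> complex^'m^'n)"
    by (auto intro!: linearI simp: msmult_def vec_eq_iff algebra_simps scaleR_conv_of_real)
  then show ?thesis by (simp add: linear_conv_bounded_linear)
qed

lemma hvd_mconj:
  "(F has_vector_derivative F') (at t) \<Longrightarrow>
   ((\<lambda>x. mconj (F x)) has_vector_derivative mconj F') (at t)"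
  by (rule bounded_linear.has_vector_derivative[OF bl_mconj])

lemma hvd_vconj:
  "(F has_vector_derivative F') (at t) \<Longrightarrow>
   ((\<lambda>x. vconj (F x)) has_vector_derivative vconj F') (at t)"
  by (rule bounded_linear.has_vector_derivative[OF bl_vconj])

lemma hvd_msmult:
  "(F has_vector_derivative F') (at t) \<Longrightarrow>
   ((\<lambda>x. msmult c (F x)) has_vector_derivative msmult c F') (at t)"
  by (rule bounded_linear.has_vector_derivative[OF bl_msmult])

lemma differentiable_prod':
  fixes f :: "'i \<Rightarrow> real \<Rightarrow> complex"
  shows "finite S \<Longrightarrow> (\<And>i. i \<in> S \<Longrightarrow> f i differentiable (at t)) \<Longrightarrow>
    (\<lambda>x. \<Prod>i\<in>S. f i x) differentiable (at t)"
  by (induction S rule: finite_induct) auto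

lemma bl_diff:
  assumes "bounded_linear g" "f differentiable (at t)"
  shows "(\<lambda>x. g (f x)) differentiable (at t)"
  using differentiable_chain_at[OF assms(2) bounded_linear_imp_differentiable[OF assms(1)]]
  by (simp add: o_def)

lemma if_differentiable:
  "f differentiable F \<Longrightarrow> (\<lambda>t. if c then a else f t) differentiable F"
  by (cases c) auto

lemma det_differentiable:
  fixes F :: "real \<Rightarrow> complex^'n^'n"
  assumes "\<And>i j. (\<lambda>t. F t $ i $ j) differentiable (at t0)"
  shows "(\<lambda>t. det (F t)) differentiable (at t0)"
  unfolding det_def
proof (intro differentiable_sum ballI differentiable_mult differentiable_const)
  fix p :: "'n \<Rightarrow> 'n"
  show "(\<lambda>x. \<Prod>i\<in>UNIV. F x $ i $ p i) differentiable (at t0)"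
    by (rule differentiable_prod') (auto intro: assms)
qed (simp add: finite_permutations)

lemma entry_differentiable:
  fixes F :: "real \<Rightarrow> complex^'n^'m"
  assumes "F differentiable (at t0)"
  shows "(\<lambda>t. F t $ i $ j) differentiable (at t0)"
proof -
  have "bounded_linear (\<lambda>A::complex^'n^'m. A $ i $ j)"
    using bounded_linear_compose[OF bounded_linear_vec_nth bounded_linear_vec_nth] by blast
  then show ?thesis
    using differentiable_chain_at[OF assms bounded_linear_imp_differentiable] by (simp add: o_def)
qed

definition memb :: "'m \<Rightarrow> 'n \<Rightarrow> complex \<Rightarrow> complex^'n^'m" where
  "memb i j z = (\<chi> a b. if a = i \<and> b = j then z else 0)"

lemma bl_memb: "bounded_linear (memb i j)"
proof -
  have "linear (memb i j)"
    by (auto intro!: linearI simp: memb_def vec_eq_iff)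
  then show ?thesis by (simp add: linear_conv_bounded_linear)
qed

lemma matrix_as_memb_sum:
  "(A::complex^'n^'m) = (\<Sum>i\<in>UNIV. \<Sum>j\<in>UNIV. memb i j (A $ i $ j))"
proof -
  have "(\<Sum>i\<in>UNIV. \<Sum>j\<in>UNIV. memb i j (A $ i $ j)) $ a $ b = A $ a $ b" for a b
  proof -
    have in1: "(\<Sum>j\<in>UNIV. if a = i \<and> b = j then A $ i $ j else 0) = (if a = i then A $ i $ b else 0)" for i
      by (cases "a = i") (simp_all add: sum.delta)
    have "(\<Sum>i\<in>UNIV. \<Sum>j\<in>UNIV. memb i j (A $ i $ j)) $ a $ b
        = (\<Sum>i\<in>UNIV. \<Sum>j\<in>UNIV. if a = i \<and> b = j then A $ i $ j else 0)"
      by (simp add: sum_component memb_def)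
    also have "\<dots> = A $ a $ b" by (simp add: in1 sum.delta)
    finally show ?thesis .
  qed
  then show ?thesis by (simp add: vec_eq_iff)
qed

lemma matrix_differentiable_from_entries:
  fixes F :: "real \<Rightarrow> complex^'n^'m"
  assumes "\<And>i j. (\<lambda>t. F t $ i $ j) differentiable (at t0)"
  shows "F differentiable (at t0)"
proof -
  have "F = (\<lambda>t. \<Sum>i\<in>UNIV. \<Sum>j\<in>UNIV. memb i j (F t $ i $ j))"
    using matrix_as_memb_sum by blast
  moreover have "(\<lambda>t. \<Sum>i\<in>UNIV. \<Sum>j\<in>UNIV. memb i j (F t $ i $ j)) differentiable (at t0)"
  proof (rule differentiable_sum, simp, rule ballI)
    fix i
    show "(\<lambda>t. \<Sum>j\<in>UNIV. memb i j (F t $ i $ j)) differentiable (at t0)"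
    proof (rule differentiable_sum, simp, rule ballI)
      fix j
      show "(\<lambda>t. memb i j (F t $ i $ j)) differentiable (at t0)"
        by (rule bl_diff[OF bl_memb assms])
    qed
  qed
  ultimately show ?thesis by simp
qed

lemma det_continuous:
  fixes F :: "real \<Rightarrow> complex^'n^'n"
  assumes "continuous (at t0) F"
  shows "continuous (at t0) (\<lambda>t. det (F t))"
proof -
  have c: "continuous (at t0) (\<lambda>t. F t $ i $ j)" for i j
  proof -
    have "bounded_linear (\<lambda>A::complex^'n^'n. A $ i $ j)"
      using bounded_linear_compose[OF bounded_linear_vec_nth bounded_linear_vec_nth] by blast
    then show ?thesis
      using assms continuous_at_compose[of t0 F "\<lambda>A. A $ i $ j"]
      by (simp add: o_def linear_continuous_at)
  qed
  show ?thesis unfolding det_def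
    by (intro continuous_intros c)
qed

lemma invertible_near:
  fixes F :: "real \<Rightarrow> complex^'n^'n"
  assumes "continuous (at t0) F" "invertible (F t0)"
  shows "\<exists>e>0. \<forall>t. dist t0 t < e \<longrightarrow> invertible (F t)"
proof -
  have "det (F t0) \<noteq> 0" using assms(2) invertible_det_nz by blast
  then obtain e where "e > 0" "\<forall>t. dist t0 t < e \<longrightarrow> det (F t) \<noteq> 0"
    using continuous_at_avoid[OF det_continuous[OF assms(1)]] by blast
  then show ?thesis using invertible_det_nz by blast
qed

lemma hvd_minv:
  fixes F :: "real \<Rightarrow> complex^'n^'n"
  assumes F: "(F has_vector_derivative F') (at t0)" and inv: "invertible (F t0)"
  shows "((\<lambda>t. matrix_inv (F t)) has_vector_derivative
           (- (matrix_inv (F t0) ** F' ** matrix_inv (F t0)))) (at t0)"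
proof -
  have Fd: "F differentiable (at t0)" using F differentiableI_vector by blast
  have Fc: "continuous (at t0) F" using Fd differentiable_imp_continuous_within by blast
  obtain e where e: "e > 0" "\<And>t. dist t0 t < e \<Longrightarrow> invertible (F t)"
    using invertible_near[OF Fc inv] by blast
  define Gt where "Gt = (\<lambda>t. (\<chi> i j. det (\<chi> k l. if l = i then (if k = j then 1 else 0) else F t $ k $ l)
                              / det (F t)) :: complex^'n^'n)"
  have eqG: "matrix_inv (F t) = Gt t" if "dist t0 t < e" for t
    using minv_vec_entry[OF e(2)[OF that]] by (simp add: Gt_def vec_eq_iff)
  have ent: "(\<lambda>t. F t $ i $ j) differentiable (at t0)" for i j
    by (rule entry_differentiable[OF Fd])
  have dd: "(\<lambda>t. det (F t)) differentiable (at t0)"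
    by (rule det_differentiable[OF ent])
  have d0: "det (F t0) \<noteq> 0" using inv invertible_det_nz by blast
  have "(\<lambda>t. det (\<chi> k l. if l = i then (if k = j then 1 else 0) else F t $ k $ l)) differentiable (at t0)"
    for i j
    by (rule det_differentiable) (auto intro!: if_differentiable ent)
  then have "(\<lambda>t. Gt t $ i $ j) differentiable (at t0)" for i j
    unfolding Gt_def using dd d0 by (auto intro!: differentiable_divide)
  then have "Gt differentiable (at t0)"
    by (rule matrix_differentiable_from_entries)
  then obtain G' where G': "(Gt has_vector_derivative G') (at t0)"
    using differentiable_def has_vector_derivative_def
    by (metis vector_derivative_works)
  have G'': "((\<lambda>t. matrix_inv (F t)) has_vector_derivative G') (at t0)"
    by (rule has_vector_derivative_transform_within[OF G' e(1)])
       (auto simp: eqG dist_commute)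
  have prod: "((\<lambda>t. matrix_inv (F t) ** F t) has_vector_derivative
          (matrix_inv (F t0) ** F' + G' ** F t0)) (at t0)"
    by (rule hvd_mm[OF G'' F])
  have "((\<lambda>t. matrix_inv (F t) ** F t) has_vector_derivative 0) (at t0)"
  proof (rule has_vector_derivative_transform_within[OF _ e(1)])
    show "((\<lambda>t. mat 1) has_vector_derivative 0) (at t0 within UNIV)" by simp
    show "t0 \<in> UNIV" by simp
    fix t assume "dist t t0 < e"
    then show "mat 1 = matrix_inv (F t) ** F t"
      using e(2) minv_left by (metis dist_commute)
  qed
  then have "matrix_inv (F t0) ** F' + G' ** F t0 = 0"
    using prod vector_derivative_unique_at by blast
  then have "G' ** F t0 = - (matrix_inv (F t0) ** F')"
    by (simp add: eq_neg_iff_add_eq_0 add.commute)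
  then have "G' ** F t0 ** matrix_inv (F t0) = - (matrix_inv (F t0) ** F') ** matrix_inv (F t0)"
    by simp
  then have "G' = - (matrix_inv (F t0) ** F' ** matrix_inv (F t0))"
    using minv_right[OF inv] by (simp add: matrix_mul_assoc[symmetric] mm_uminus_left)
  then show ?thesis using G'' by simp
qed


section \<open>Block matrices\<close>

lemma sum_UNIV_Plus:
  "(\<Sum>x\<in>(UNIV::('a::finite+'b::finite) set). f x) = (\<Sum>a\<in>UNIV. f (Inl a)) + (\<Sum>b\<in>UNIV. f (Inr b))"
proof -
  have "(\<Sum>x\<in>(UNIV::('a+'b) set). f x) = (\<Sum>x\<in>(UNIV <+> UNIV). f x)" by simp
  also have "\<dots> = sum (f \<circ> Inl) UNIV + sum (f \<circ> Inr) UNIV" by (rule sum.Plus) auto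
  finally show ?thesis by (simp add: o_def)
qed

lemma prod_UNIV_Plus:
  "(\<Prod>x\<in>(UNIV::('a::finite+'b::finite) set). f x) = (\<Prod>a\<in>UNIV. f (Inl a)) * (\<Prod>b\<in>UNIV. f (Inr b))"
proof -
  have "(\<Prod>x\<in>(UNIV::('a+'b) set). f x) = (\<Prod>x\<in>(UNIV <+> UNIV). f x)" by simp
  also have "\<dots> = prod (f \<circ> Inl) UNIV * prod (f \<circ> Inr) UNIV" by (rule prod.Plus) auto
  finally show ?thesis by (simp add: o_def)
qed

definition blk :: "complex^'b^'a \<Rightarrow> complex^'d^'a \<Rightarrow> complex^'b^'c \<Rightarrow> complex^'d^'c
                    \<Rightarrow> complex^('b+'d)^('a+'c)" where
  "blk A B C D = (\<chi> i j. case i of Inl a \<Rightarrow> (case j of Inl b \<Rightarrow> A$a$b | Inr d \<Rightarrow> B$a$d)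
                                 | Inr c \<Rightarrow> (case j of Inl b \<Rightarrow> C$c$b | Inr d \<Rightarrow> D$c$d))"

lemma blk_nth[simp]:
  "blk A B C D $ Inl a $ Inl b = A$a$b" "blk A B C D $ Inl a $ Inr d = B$a$d"
  "blk A B C D $ Inr c $ Inl b = C$c$b" "blk A B C D $ Inr c $ Inr d = D$c$d"
  by (simp_all add: blk_def)

lemma blk_eqI:
  assumes "\<And>a b. X $ Inl a $ Inl b = A$a$b" "\<And>a d. X $ Inl a $ Inr d = B$a$d"
    "\<And>c b. X $ Inr c $ Inl b = C$c$b" "\<And>c d. X $ Inr c $ Inr d = D$c$d"
  shows "X = blk A B C D"
proof -
  have "X $ i $ j = blk A B C D $ i $ j" for i j
    by (cases i; cases j) (simp_all add: assms)
  then show ?thesis by (simp add: vec_eq_iff)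
qed

lemma blk_mult:
  "blk A B C D ** blk A' B' C' D' =
   blk (A**A' + B**C') (A**B' + B**D') (C**A' + D**C') (C**B' + D**D')"
  by (rule blk_eqI) (simp_all add: matrix_matrix_mult_def sum_UNIV_Plus)

lemma blk_add: "blk A B C D + blk A' B' C' D' = blk (A+A') (B+B') (C+C') (D+D')"
  by (rule blk_eqI) simp_all

lemma blk_diff: "blk A B C D - blk A' B' C' D' = blk (A-A') (B-B') (C-C') (D-D')"
  by (rule blk_eqI) simp_all

lemma blk_uminus: "- blk A B C D = blk (-A) (-B) (-C) (-D)"
  by (rule blk_eqI) simp_all

lemma blk_zero: "(0::complex^('b::finite+'d::finite)^('a::finite+'c::finite)) = blk 0 0 0 0"
  by (rule blk_eqI) simp_all

lemma blk_one: "(mat 1::complex^('a::finite+'c::finite)^('a+'c)) = blk (mat 1) 0 0 (mat 1)"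
  by (rule blk_eqI) (simp_all add: mat_def)

lemma blk_msmult: "msmult c (blk A B C D) = blk (msmult c A) (msmult c B) (msmult c C) (msmult c D)"
  by (rule blk_eqI) (simp_all add: msmult_def)

lemma blk_mconj: "mconj (blk A B C D) = blk (mconj A) (mconj B) (mconj C) (mconj D)"
  by (rule blk_eqI) (simp_all add: mconj_def)

lemma blk_transpose: "transpose (blk A B C D) = blk (transpose A) (transpose C) (transpose B) (transpose D)"
  by (rule blk_eqI) (simp_all add: transpose_def)

definition colblk :: "complex^'k^'a \<Rightarrow> complex^'k^'c \<Rightarrow> complex^'k^('a+'c)" where
  "colblk u w = (\<chi> i k. case i of Inl a \<Rightarrow> u$a$k | Inr c \<Rightarrow> w$c$k)"

definition rowblk :: "complex^'a^'k \<Rightarrow> complex^'c^'k \<Rightarrow> complex^('a+'c)^'k" where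
  "rowblk x y = (\<chi> k j. case j of Inl a \<Rightarrow> x$k$a | Inr c \<Rightarrow> y$k$c)"

lemma colblk_nth[simp]: "colblk u w $ Inl a $ k = u$a$k" "colblk u w $ Inr c $ k = w$c$k"
  by (simp_all add: colblk_def)

lemma rowblk_nth[simp]: "rowblk x y $ k $ Inl a = x$k$a" "rowblk x y $ k $ Inr c = y$k$c"
  by (simp_all add: rowblk_def)

lemma colblk_eqI:
  assumes "\<And>a k. X $ Inl a $ k = u$a$k" "\<And>c k. X $ Inr c $ k = w$c$k"
  shows "X = colblk u w"
proof -
  have "X $ i $ k = colblk u w $ i $ k" for i k by (cases i) (simp_all add: assms)
  then show ?thesis by (simp add: vec_eq_iff)
qed

lemma rowblk_eqI:
  assumes "\<And>a k. X $ k $ Inl a = x$k$a" "\<And>c k. X $ k $ Inr c = y$k$c"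
  shows "X = rowblk x y"
proof -
  have "X $ k $ j = rowblk x y $ k $ j" for j k by (cases j) (simp_all add: assms)
  then show ?thesis by (simp add: vec_eq_iff)
qed

lemma blk_colblk: "blk A B C D ** colblk u w = colblk (A**u + B**w) (C**u + D**w)"
  by (rule colblk_eqI) (simp_all add: matrix_matrix_mult_def sum_UNIV_Plus)

lemma rowblk_blk: "rowblk x y ** blk A B C D = rowblk (x**A + y**C) (x**B + y**D)"
  by (rule rowblk_eqI) (simp_all add: matrix_matrix_mult_def sum_UNIV_Plus)

lemma rowblk_colblk: "rowblk x y ** colblk u w = x**u + y**w"
  by (simp add: vec_eq_iff matrix_matrix_mult_def sum_UNIV_Plus)

lemma colblk_rowblk: "colblk u w ** rowblk x y = blk (u**x) (u**y) (w**x) (w**y)"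
  by (rule blk_eqI) (simp_all add: matrix_matrix_mult_def)

lemma colblk_mult: "colblk u w ** Z = colblk (u**Z) (w**Z)"
  by (rule colblk_eqI) (simp_all add: matrix_matrix_mult_def)

lemma mult_rowblk: "Z ** rowblk x y = rowblk (Z**x) (Z**y)"
  by (rule rowblk_eqI) (simp_all add: matrix_matrix_mult_def)

lemma colblk_mconj: "mconj (colblk u w) = colblk (mconj u) (mconj w)"
  by (rule colblk_eqI) (simp_all add: mconj_def)

lemma rowblk_mconj: "mconj (rowblk x y) = rowblk (mconj x) (mconj y)"
  by (rule rowblk_eqI) (simp_all add: mconj_def)

lemma colblk_add: "colblk u w + colblk u' w' = colblk (u+u') (w+w')"
  by (rule colblk_eqI) simp_all

lemma rowblk_add: "rowblk x y + rowblk x' y' = rowblk (x+x') (y+y')"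
  by (rule rowblk_eqI) simp_all

lemma colblk_uminus: "- colblk u w = colblk (-u) (-w)"
  by (rule colblk_eqI) simp_all

lemma rowblk_uminus: "- rowblk x y = rowblk (-x) (-y)"
  by (rule rowblk_eqI) simp_all

section \<open>A determinant lemma for block matrices\<close>

definition liftp :: "('a \<Rightarrow> 'a) \<Rightarrow> ('a + 'b) \<Rightarrow> ('a + 'b)" where
  "liftp q x = (case x of Inl a \<Rightarrow> Inl (q a) | Inr b \<Rightarrow> Inr b)"

lemma liftp_simps[simp]: "liftp q (Inl a) = Inl (q a)" "liftp q (Inr b) = Inr b"
  by (simp_all add: liftp_def)

lemma liftp_comp: "liftp (p \<circ> q) = liftp p \<circ> liftp q"
  by (rule ext, case_tac x) auto

lemma liftp_id: "liftp id = id"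
  by (rule ext, case_tac x) auto

lemma liftp_permutes:
  fixes q :: "'a::finite \<Rightarrow> 'a"
  assumes "q permutes UNIV"
  shows "(liftp q :: 'a + 'b::finite \<Rightarrow> _) permutes UNIV"
proof -
  have A: "liftp q \<circ> liftp (inv q) = (id :: 'a + 'b \<Rightarrow> _)"
    using permutes_inv_o(1)[OF assms] by (simp add: liftp_comp[symmetric] liftp_id)
  have B: "liftp (inv q) \<circ> liftp q = (id :: 'a + 'b \<Rightarrow> _)"
    using permutes_inv_o(2)[OF assms] by (simp add: liftp_comp[symmetric] liftp_id)
  have "bij (liftp q :: 'a + 'b \<Rightarrow> _)" by (rule o_bij[OF B A])
  then show ?thesis by (auto intro: bij_imp_permutes)
qed

lemma liftp_transpose: "liftp (Transposition.transpose a b) = Transposition.transpose (Inl a) (Inl b)"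
  by (rule ext, case_tac x) (auto simp: Transposition.transpose_def)

lemma sign_liftp:
  fixes q :: "'a::finite \<Rightarrow> 'a"
  assumes "q permutes UNIV"
  shows "sign (liftp q :: 'a + 'b::finite \<Rightarrow> _) = sign q"
proof -
  have fin: "finite (UNIV :: 'a set)" by simp
  show ?thesis using assms fin
proof (induction rule: permutes_induct)
  case id
  have "liftp (\<lambda>a. a) = (id :: 'a + 'b \<Rightarrow> _)" by (rule ext, case_tac x) auto
  then show ?case by (simp add: id_def)
next
  case (swap a b p)
  have pp: "permutation p" using swap(4) by (auto simp: permutation_permutes)
  have lp: "permutation (liftp p :: 'a + 'b \<Rightarrow> _)"
    using liftp_permutes[OF swap(4)] by (auto simp: permutation_permutes)
  have "sign (liftp (Transposition.transpose a b \<circ> p) :: 'a + 'b \<Rightarrow> _)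
        = sign (Transposition.transpose (Inl a :: 'a + 'b) (Inl b) \<circ> liftp p)"
    by (simp add: liftp_comp liftp_transpose)
  also have "\<dots> = sign (Transposition.transpose (Inl a :: 'a + 'b) (Inl b)) * sign (liftp p :: 'a + 'b \<Rightarrow> _)"
    by (rule sign_compose[OF permutation_swap_id lp])
  also have "\<dots> = sign (Transposition.transpose a b) * sign p"
    using swap by (simp add: sign_swap_id)
  also have "\<dots> = sign (Transposition.transpose a b \<circ> p)"
    by (rule sign_compose[OF permutation_swap_id pp, symmetric])
  finally show ?case .
qed
qed

lemma det_blk_upper:
  fixes D :: "complex^'a^'a" and C :: "complex^'b^'a"
  shows "det (blk D C 0 (mat 1)) = det D"
proof -
  let ?T = "blk D C 0 (mat 1)"
  let ?S1 = "{p. p permutes (UNIV :: ('a+'b) set)}"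
  let ?S0 = "{q. q permutes (UNIV :: 'a set)}"
  let ?f = "\<lambda>p. of_int (sign p) * (\<Prod>i\<in>UNIV. ?T $ i $ p i)"
  have inj: "inj_on (liftp :: ('a \<Rightarrow> 'a) \<Rightarrow> ('a+'b) \<Rightarrow> _) ?S0"
  proof (rule inj_onI)
    fix q1 q2 :: "'a \<Rightarrow> 'a"
    assume "(liftp q1 :: ('a+'b) \<Rightarrow> _) = liftp q2"
    then have "\<And>a. (liftp q1 :: ('a+'b) \<Rightarrow> _) (Inl a) = liftp q2 (Inl a)" by simp
    then show "q1 = q2" by (auto intro: ext)
  qed
  have sub: "liftp ` ?S0 \<subseteq> ?S1" using liftp_permutes by blast
  have zero: "?f p = 0" if p: "p \<in> ?S1 - liftp ` ?S0" for p
  proof (rule ccontr)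
    assume "?f p \<noteq> 0"
    then have nz: "\<And>i. ?T $ i $ p i \<noteq> 0" by auto
    have pr: "p (Inr b) = Inr b" for b
    proof (cases "p (Inr b)")
      case (Inl a) then show ?thesis using nz[of "Inr b"] by simp
    next
      case (Inr b') then show ?thesis using nz[of "Inr b"] by (simp add: mat_def split: if_splits)
    qed
    have pinj: "inj p" using p by (auto dest: permutes_inj)
    have pl: "\<exists>a'. p (Inl a) = Inl a'" for a
    proof (cases "p (Inl a)")
      case (Inr b) then have "p (Inl a) = p (Inr b)" using pr by simp
      then show ?thesis using pinj by (auto dest: injD)
    qed simp
    define q where "q a = (THE a'. p (Inl a) = Inl a')" for a
    have pq: "p (Inl a) = Inl (q a)" for a
      using pl[of a] unfolding q_def by (metis (mono_tags, lifting) sum.inject(1) theI)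
    have peq: "p = liftp q"
      by (rule ext, case_tac x) (simp_all add: pq pr)
    have "inj q"
    proof (rule injI)
      fix x y assume "q x = q y"
      then have "p (Inl x) = p (Inl y)" by (simp add: pq)
      then show "x = y" using pinj by (auto dest: injD)
    qed
    then have "bij q" using finite_UNIV_inj_surj[of q] by (simp add: bij_def)
    then have "q permutes UNIV" by (auto intro: bij_imp_permutes)
    then show False using p peq by blast
  qed
  have "det ?T = sum ?f ?S1" by (simp add: det_def)
  also have "\<dots> = sum ?f (liftp ` ?S0)"
  proof (rule sum.mono_neutral_right[OF _ sub])
    show "finite ?S1" by (simp add: finite_permutations)
    show "\<forall>i\<in>?S1 - liftp ` ?S0. ?f i = 0" using zero by blast
  qed
  also have "\<dots> = sum (?f \<circ> liftp) ?S0"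
    by (rule sum.reindex[OF inj])
  also have "\<dots> = (\<Sum>q\<in>?S0. of_int (sign q) * (\<Prod>i\<in>UNIV. D $ i $ q i))"
  proof (rule sum.cong[OF refl])
    fix q assume q: "q \<in> ?S0"
    have "(\<Prod>i\<in>UNIV. ?T $ i $ (liftp q :: ('a+'b) \<Rightarrow> _) i) = (\<Prod>i\<in>UNIV. D $ i $ q i)"
      by (simp add: prod_UNIV_Plus mat_def)
    moreover have "sign (liftp q :: ('a+'b) \<Rightarrow> _) = sign q" by (rule sign_liftp) (use q in simp)
    ultimately show "(?f \<circ> liftp) q = of_int (sign q) * (\<Prod>i\<in>UNIV. D $ i $ q i)"
      by simp
  qed
  also have "\<dots> = det D" by (simp add: det_def)
  finally show ?thesis .
qed

lemma det_blk_lower: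
  fixes D :: "complex^'a^'a" and C :: "complex^'a^'b"
  shows "det (blk D 0 C (mat 1)) = det D"
proof -
  have "det (blk D 0 C (mat 1)) = det (transpose (blk D 0 C (mat 1)))" by simp
  also have "\<dots> = det (blk (transpose D) (transpose C) 0 (mat 1))"
  proof -
    have t0: "transpose (0::complex^'b^'a) = 0" by (simp add: transpose_def vec_eq_iff)
    show ?thesis by (simp only: blk_transpose t0 transpose_mat)
  qed
  also have "\<dots> = det D" by (simp add: det_blk_upper)
  finally show ?thesis .
qed

lemma det_sylv:
  fixes A :: "complex^'m^'k" and B :: "complex^'k^'m"
  shows "det (mat 1 + A ** B) = det (blk (mat 1 :: complex^'k^'k) 0 0 (mat 1 + B ** A))"
proof -
  let ?L = "blk (mat 1 :: complex^'k^'k) 0 B (mat 1)"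
  let ?U1 = "blk (mat 1 :: complex^'k^'k) (-A) 0 (mat 1 + B ** A)"
  let ?U2 = "blk (mat 1 + A ** B) (-A) 0 (mat 1 :: complex^'m^'m)"
  have eq: "?L ** ?U1 = ?U2 ** ?L"
    by (simp add: blk_mult matrix_add_ldistrib mm_add_rdistrib mm_uminus_left mm_uminus_right)
  have dL: "det ?L = 1" by (simp add: det_blk_lower)
  have dU2: "det ?U2 = det (mat 1 + A ** B)" by (rule det_blk_upper)
  have U1: "?U1 = blk (mat 1 :: complex^'k^'k) 0 0 (mat 1 + B ** A) ** blk (mat 1) (-A) 0 (mat 1)"
    by (simp add: blk_mult)
  have dU1: "det ?U1 = det (blk (mat 1 :: complex^'k^'k) 0 0 (mat 1 + B ** A))"
    unfolding U1 det_mul by (simp add: det_blk_upper)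
  show ?thesis using arg_cong[OF eq, of det] by (simp add: det_mul dL dU1 dU2)
qed


lemma mm_cancel: "B ** C = mat 1 \<Longrightarrow> A ** B ** C = A"
  by (metis matrix_mul_assoc matrix_mul_rid)

lemma Jinv_generic:
  fixes Kb Kbi N G :: "complex^'m^'m" and R :: "complex^'k^'m" and S :: "complex^'m^'k"
  assumes KK: "Kb ** Kbi = mat 1" "Kbi ** Kb = mat 1"
    and NG: "N ** G = mat 1" "G ** N = mat 1"
    and RS: "N ** Kb - Kb ** N = R ** S"
  shows "G ** Kbi - Kbi ** G = G ** Kbi ** R ** S ** Kbi ** G"
    and "(mat 1 + S ** G ** Kbi ** R) ** (mat 1 - S ** Kbi ** G ** R) = mat 1"
    and "G ** Kbi ** R ** (mat 1 - S ** Kbi ** G ** R) = Kbi ** G ** R"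
    and "mat 1 + G ** Kbi ** R ** S = G ** Kbi ** N ** Kb"
proof -
  have "G ** Kbi ** R ** S ** Kbi ** G = G ** Kbi ** (R ** S) ** Kbi ** G"
    by (simp add: matrix_mul_assoc)
  also have "\<dots> = G ** Kbi ** N ** (Kb ** Kbi) ** G - G ** (Kbi ** Kb) ** N ** Kbi ** G"
    by (simp add: RS[symmetric] mm_diff_ldistrib mm_diff_rdistrib matrix_mul_assoc)
  also have "\<dots> = G ** Kbi ** (N ** G) - (G ** N) ** Kbi ** G"
    by (simp add: KK matrix_mul_assoc)
  also have "\<dots> = G ** Kbi - Kbi ** G" by (simp add: NG)
  finally show Z1: "G ** Kbi - Kbi ** G = G ** Kbi ** R ** S ** Kbi ** G" by simp
  have "S ** (G ** Kbi - Kbi ** G) ** R = (S ** G ** Kbi ** R) ** (S ** Kbi ** G ** R)"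
    unfolding Z1 by (simp add: matrix_mul_assoc)
  then have XY: "S ** G ** Kbi ** R - S ** Kbi ** G ** R = (S ** G ** Kbi ** R) ** (S ** Kbi ** G ** R)"
    by (simp add: mm_diff_ldistrib mm_diff_rdistrib matrix_mul_assoc)
  show "(mat 1 + S ** G ** Kbi ** R) ** (mat 1 - S ** Kbi ** G ** R) = mat 1"
    using XY by (simp add: mm_add_rdistrib mm_diff_ldistrib algebra_simps)
  have "G ** Kbi ** R ** (mat 1 - S ** Kbi ** G ** R) = (G ** Kbi - G ** Kbi ** R ** S ** Kbi ** G) ** R"
    by (simp add: mm_diff_ldistrib mm_diff_rdistrib matrix_mul_assoc)
  also have "\<dots> = Kbi ** G ** R" unfolding Z1[symmetric] by simp
  finally show "G ** Kbi ** R ** (mat 1 - S ** Kbi ** G ** R) = Kbi ** G ** R" .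
  have "G ** Kbi ** R ** S = G ** Kbi ** (R ** S)" by (simp add: matrix_mul_assoc)
  also have "\<dots> = G ** Kbi ** N ** Kb - G ** (Kbi ** Kb) ** N"
    by (simp add: RS[symmetric] mm_diff_ldistrib matrix_mul_assoc)
  also have "\<dots> = G ** Kbi ** N ** Kb - mat 1" by (simp add: KK NG)
  finally show "mat 1 + G ** Kbi ** R ** S = G ** Kbi ** N ** Kb" by simp
qed

lemma mconj_mult: "mconj (A ** B) = mconj A ** mconj B"
  by (simp add: mconj_def matrix_matrix_mult_def vec_eq_iff)

lemma mconj_mconj[simp]: "mconj (mconj A) = A"
  by (simp add: mconj_def vec_eq_iff)

lemma mconj_mat[simp]: "mconj (mat c) = mat (cnj c)"
  by (simp add: mconj_def mat_def vec_eq_iff)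

lemma mconj_add: "mconj (A + B) = mconj A + mconj B"
  by (simp add: mconj_def vec_eq_iff)

lemma mconj_diff: "mconj (A - B) = mconj A - mconj B"
  by (simp add: mconj_def vec_eq_iff)

lemma mconj_uminus: "mconj (- A) = - mconj A"
  by (simp add: mconj_def vec_eq_iff)

lemma mconj_zero[simp]: "mconj 0 = 0"
  by (simp add: mconj_def vec_eq_iff)

lemma mconj_msmult: "mconj (msmult c A) = msmult (cnj c) (mconj A)"
  by (simp add: mconj_def msmult_def vec_eq_iff)

lemma vconj_mv: "vconj (A *v x) = mconj A *v vconj x"
  by (simp add: vconj_def mconj_def matrix_vector_mult_def vec_eq_iff)

lemma vconj_vconj[simp]: "vconj (vconj x) = x"
  by (simp add: vconj_def vec_eq_iff)

lemma invertible_mconj: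
  fixes A :: "complex^'n^'n"
  assumes "invertible A" shows "invertible (mconj A)" "matrix_inv (mconj A) = mconj (matrix_inv A)"
proof -
  have "mconj A ** mconj (matrix_inv A) = mat 1"
    using minv_right[OF assms] by (simp add: mconj_mult[symmetric])
  then show "invertible (mconj A)" by (rule invertible_iff_right)
  show "matrix_inv (mconj A) = mconj (matrix_inv A)" using \<open>mconj A ** mconj (matrix_inv A) = mat 1\<close>
    by (rule minv_unique)
qed


definition col1 :: "complex^'n \<Rightarrow> complex^2^'n" where "col1 x = (\<chi> a k. if k = 1 then x$a else 0)"
definition col2 :: "complex^'n \<Rightarrow> complex^2^'n" where "col2 x = (\<chi> a k. if k = 2 then x$a else 0)"
definition row1 :: "complex^'n \<Rightarrow> complex^'n^2" where "row1 y = (\<chi> k a. if k = 1 then y$a else 0)"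
definition row2 :: "complex^'n \<Rightarrow> complex^'n^2" where "row2 y = (\<chi> k a. if k = 2 then y$a else 0)"

lemma col_row_prods:
  "col1 x ** row1 y = outer x y" "col2 x ** row2 y = outer x y"
  "col1 x ** row2 y = 0" "col2 x ** row1 y = 0"
  by (simp_all add: col1_def col2_def row1_def row2_def outer_def matrix_matrix_mult_def
      vec_eq_iff sum_2)

lemma mult_col: "A ** col1 x = col1 (A *v x)" "A ** col2 x = col2 (A *v x)"
proof -
  have "(A ** col1 x) $ a $ k = col1 (A *v x) $ a $ k" for a k
    by (cases "k = 1") (simp_all add: col1_def matrix_matrix_mult_def matrix_vector_mult_def)
  moreover have "(A ** col2 x) $ a $ k = col2 (A *v x) $ a $ k" for a k
    by (cases "k = 2") (simp_all add: col2_def matrix_matrix_mult_def matrix_vector_mult_def)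
  ultimately show "A ** col1 x = col1 (A *v x)" "A ** col2 x = col2 (A *v x)"
    by (simp_all add: vec_eq_iff)
qed

lemma row_mult: "row1 y ** A = row1 (y v* A)" "row2 y ** A = row2 (y v* A)"
proof -
  have "(row1 y ** A) $ k $ a = row1 (y v* A) $ k $ a" for a k
    by (cases "k = 1") (simp_all add: row1_def matrix_matrix_mult_def vector_matrix_mult_def)
  moreover have "(row2 y ** A) $ k $ a = row2 (y v* A) $ k $ a" for a k
    by (cases "k = 2") (simp_all add: row2_def matrix_matrix_mult_def vector_matrix_mult_def)
  ultimately show "row1 y ** A = row1 (y v* A)" "row2 y ** A = row2 (y v* A)"
    by (simp_all add: vec_eq_iff)
qed

lemma row_col_prods:
  "row1 y ** col1 x = (\<chi> i j. if i = 1 \<and> j = 1 then bil y x else 0)"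
  "row1 y ** col2 x = (\<chi> i j. if i = 1 \<and> j = 2 then bil y x else 0)"
  "row2 y ** col1 x = (\<chi> i j. if i = 2 \<and> j = 1 then bil y x else 0)"
  "row2 y ** col2 x = (\<chi> i j. if i = 2 \<and> j = 2 then bil y x else 0)"
proof -
  have e: "(row1 y ** col1 x) $ i $ j = (if i = 1 \<and> j = 1 then bil y x else 0)"
    "(row1 y ** col2 x) $ i $ j = (if i = 1 \<and> j = 2 then bil y x else 0)"
    "(row2 y ** col1 x) $ i $ j = (if i = 2 \<and> j = 1 then bil y x else 0)"
    "(row2 y ** col2 x) $ i $ j = (if i = 2 \<and> j = 2 then bil y x else 0)" for i j
    by (cases "i = 1"; cases "j = 1"; cases "i = 2"; cases "j = 2";
        simp add: col1_def col2_def row1_def row2_def bil_def matrix_matrix_mult_def)+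
  then show "row1 y ** col1 x = (\<chi> i j. if i = 1 \<and> j = 1 then bil y x else 0)"
    "row1 y ** col2 x = (\<chi> i j. if i = 1 \<and> j = 2 then bil y x else 0)"
    "row2 y ** col1 x = (\<chi> i j. if i = 2 \<and> j = 1 then bil y x else 0)"
    "row2 y ** col2 x = (\<chi> i j. if i = 2 \<and> j = 2 then bil y x else 0)"
    by (simp_all add: vec_eq_iff)
qed

lemma col_mconj: "mconj (col1 x) = col1 (vconj x)" "mconj (col2 x) = col2 (vconj x)"
  by (simp_all add: col1_def col2_def mconj_def vconj_def vec_eq_iff)

lemma row_mconj: "mconj (row1 x) = row1 (vconj x)" "mconj (row2 x) = row2 (vconj x)"
  by (simp_all add: row1_def row2_def mconj_def vconj_def vec_eq_iff)

lemma col_uminus: "col1 (-x) = - col1 x" "col2 (-x) = - col2 x"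
  by (simp_all add: col1_def col2_def vec_eq_iff)

lemma row_uminus: "row1 (-x) = - row1 x" "row2 (-x) = - row2 x"
  by (simp_all add: row1_def row2_def vec_eq_iff)

lemma outer_vm: "outer x (y v* A) = outer x y ** A"
  by (simp add: outer_def vector_matrix_mult_def matrix_matrix_mult_def vec_eq_iff sum_distrib_left
      mult.assoc)

lemma mult_outer: "A ** outer x y = outer (A *v x) y"
  by (simp add: outer_def matrix_vector_mult_def matrix_matrix_mult_def vec_eq_iff sum_distrib_right
      mult.assoc)

lemma mconj_outer: "mconj (outer x y) = outer (vconj x) (vconj y)"
  by (simp add: outer_def mconj_def vconj_def vec_eq_iff)

lemma bil_vm: "bil (x v* A) y = bil x (A *v y)"
  by (simp add: bil_def vector_matrix_mult_def matrix_vector_mult_def sum_distrib_left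
      sum_distrib_right mult_ac) (rule sum.swap)

lemma bil_uminus: "bil (-x) y = - bil x y" "bil x (-y) = - bil x y"
  by (simp_all add: bil_def sum_negf)

definition Lm :: "complex^'n^'n \<Rightarrow> complex^'n^'n" where "Lm K = matrix_inv (mconj K)"
definition Kb :: "complex^'n^'n \<Rightarrow> complex^('n+'n)^('n+'n)" where "Kb K = blk K 0 0 (- Lm K)"
definition Kbi :: "complex^'n^'n \<Rightarrow> complex^('n+'n)^('n+'n)" where
  "Kbi K = blk (matrix_inv K) 0 0 (- mconj K)"
definition Mb :: "complex^'n^'n \<Rightarrow> complex^('n+'n)^('n+'n)" where "Mb M = blk 0 M (mconj M) 0"
definition rb :: "complex^'n^'n \<Rightarrow> complex^'n \<Rightarrow> complex^2^('n+'n)" where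
  "rb K r = colblk (col1 r) (col2 (Lm K *v vconj r))"
definition sb :: "complex^'n^'n \<Rightarrow> complex^'n \<Rightarrow> complex^('n+'n)^2" where
  "sb K s = rowblk (row2 s) (row1 (- (vconj s v* Lm K)))"
definition Gm :: "complex^'n^'n \<Rightarrow> complex^('n+'n)^('n+'n)" where
  "Gm M = matrix_inv (mat 1 - Mb M)"
definition Jm :: "complex^'n^'n \<Rightarrow> complex^'n \<Rightarrow> complex^'n \<Rightarrow> complex^'n^'n \<Rightarrow> complex^2^2" where
  "Jm K r s M = mat 1 + sb K s ** Gm M ** Kbi K ** rb K r"
definition Ym :: "complex^'n^'n \<Rightarrow> complex^'n \<Rightarrow> complex^'n \<Rightarrow> complex^'n^'n \<Rightarrow> complex^2^2" where
  "Ym K r s M = sb K s ** Kbi K ** Gm M ** rb K r"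
definition gam :: "complex^2^2" where "gam = (\<chi> i j. if i = j then (if i = 1 then 1 else -1) else 0)"
definition Em :: "complex^2^2" where
  "Em = (\<chi> i j. if i = 1 \<and> j = 2 then 1 else if i = 2 \<and> j = 1 then -1 else 0)"
definition Pim :: "complex^('n::finite+'n)^('n+'n)" where "Pim = blk 0 (mat 1) (mat 1) 0"

lemma gam_gam: "gam ** gam = mat 1"
  by (simp add: gam_def mat_def matrix_matrix_mult_def vec_eq_iff sum_2 forall_2)

lemma Em_Em: "Em ** Em = - mat 1"
  by (simp add: Em_def mat_def matrix_matrix_mult_def vec_eq_iff sum_2 forall_2)

lemma Pim_Pim: "Pim ** Pim = mat 1"
  by (simp add: Pim_def blk_mult blk_one)

context
  fixes K :: "complex^'n^'n"
  assumes K_inv: "invertible K"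
begin

lemma Lm_facts:
  "invertible (mconj K)" "Lm K ** mconj K = mat 1" "mconj K ** Lm K = mat 1"
  "mconj (Lm K) = matrix_inv K"
  using invertible_mconj[OF K_inv] minv[of "mconj K"]
  by (auto simp: Lm_def)

lemma Kb_Kbi: "Kb K ** Kbi K = mat 1" "Kbi K ** Kb K = mat 1"
  using Lm_facts minv[OF K_inv]
  by (simp_all add: Kb_def Kbi_def blk_mult blk_one mm_uminus_left mm_uminus_right)

lemma comm_rel:
  assumes Meq: "K ** M + M ** Lm K = - (outer r (vconj s) ** Lm K)"
  shows "(mat 1 - Mb M) ** Kb K - Kb K ** (mat 1 - Mb M) = rb K r ** sb K s"
proof -
  have c1: "mconj K ** mconj M + mconj M ** matrix_inv K = - (outer (vconj r) s ** matrix_inv K)"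
    using arg_cong[OF Meq, of mconj] Lm_facts(4)
    by (simp add: mconj_add mconj_mult mconj_uminus mconj_outer)
  have "Lm K ** (mconj K ** mconj M + mconj M ** matrix_inv K) ** K
      = - (Lm K ** outer (vconj r) s ** matrix_inv K ** K)"
    unfolding c1 by (simp add: mm_uminus_left mm_uminus_right matrix_mul_assoc)
  then have c2: "mconj M ** K + Lm K ** mconj M = - outer (Lm K *v vconj r) s"
    using Lm_facts minv[OF K_inv]
    by (simp add: matrix_add_ldistrib mm_add_rdistrib matrix_mul_assoc mult_outer)
       (simp add: matrix_mul_assoc[symmetric] add.commute)
  have lhs: "(mat 1 - Mb M) ** Kb K - Kb K ** (mat 1 - Mb M) = Kb K ** Mb M - Mb M ** Kb K"
    by (simp add: mm_diff_ldistrib mm_diff_rdistrib)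
  have A: "Kb K ** Mb M - Mb M ** Kb K = blk 0 (K ** M + M ** Lm K) (- (Lm K ** mconj M) - mconj M ** K) 0"
    by (simp add: Kb_def Mb_def blk_mult blk_diff mm_uminus_left mm_uminus_right)
  have B: "rb K r ** sb K s = blk 0 (- (outer r (vconj s) ** Lm K)) (outer (Lm K *v vconj r) s) 0"
    by (simp add: rb_def sb_def colblk_rowblk col_row_prods row_uminus mm_uminus_right outer_vm)
  have c3: "- (Lm K ** mconj M) - mconj M ** K = outer (Lm K *v vconj r) s"
  proof -
    have "- (Lm K ** mconj M) - mconj M ** K = - (mconj M ** K + Lm K ** mconj M)"
      by (metis add.commute minus_add_distrib diff_conv_add_uminus)
    also have "\<dots> = outer (Lm K *v vconj r) s" unfolding c2 by simp
    finally show ?thesis .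
  qed
  show ?thesis unfolding lhs A B Meq c3 ..
qed

end


lemma vconj_vm: "vconj (x v* A) = vconj x v* mconj A"
  by (simp add: vconj_def mconj_def vector_matrix_mult_def vec_eq_iff)

lemma col_zero[simp]: "col1 0 = 0" "col2 0 = 0" "row1 0 = 0" "row2 0 = 0"
  by (simp_all add: col1_def col2_def row1_def row2_def vec_eq_iff)

lemma neg_mv: "(- (A::complex^'n^'m)) *v x = - (A *v x)"
  using matrix_vector_mult_diff_rdistrib[of 0 A x] by simp

lemma vm_neg: "x v* (- (A::complex^'n^'m)) = - (x v* A)"
  by (simp add: vector_matrix_mult_def vec_eq_iff sum_negf)

lemma col_Em: "col1 x ** Em = col2 x" "col2 x ** Em = - col1 x"
  by (simp_all add: col1_def col2_def Em_def matrix_matrix_mult_def vec_eq_iff sum_2)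

lemma Em_row: "Em ** row1 y = - row2 y" "Em ** row2 y = row1 y"
  by (simp_all add: row1_def row2_def Em_def matrix_matrix_mult_def vec_eq_iff sum_2)

lemma Pim_colblk: "Pim ** colblk u w = colblk w u"
  by (simp add: Pim_def blk_colblk)

lemma rowblk_Pim: "rowblk x y ** Pim = rowblk y x"
  by (simp add: Pim_def rowblk_blk)

lemma Pim_blk: "Pim ** blk A B C D ** Pim = blk D C B A"
  by (simp add: Pim_def blk_mult)

lemma conj_generic:
  fixes Pi Kb Kbi G :: "complex^'m^'m" and R :: "complex^'k^'m" and S :: "complex^'m^'k"
    and E :: "complex^'k^'k"
  assumes PP: "Pi ** Pi = mat 1" and KK: "Kb ** Kbi = mat 1" and EE: "E ** E = - mat 1"
  shows "mat 1 + (- (E ** S ** Kbi ** Pi)) ** (Pi ** G ** Pi) ** (- (Pi ** Kb ** Pi)) ** (Pi ** Kbi ** R ** E)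
         = E ** (mat 1 - S ** Kbi ** G ** R) ** (- E)"
proof -
  have "(- (E ** S ** Kbi ** Pi)) ** (Pi ** G ** Pi) ** (- (Pi ** Kb ** Pi)) ** (Pi ** Kbi ** R ** E)
      = E ** S ** Kbi ** (Pi ** Pi) ** G ** (Pi ** Pi) ** Kb ** (Pi ** Pi) ** Kbi ** R ** E"
    by (simp add: mm_uminus_left mm_uminus_right matrix_mul_assoc)
  also have "\<dots> = E ** S ** Kbi ** G ** (Kb ** Kbi) ** R ** E"
    by (simp add: PP matrix_mul_assoc)
  also have "\<dots> = E ** (S ** Kbi ** G ** R) ** E"
    by (simp add: KK matrix_mul_assoc)
  finally have 1: "(- (E ** S ** Kbi ** Pi)) ** (Pi ** G ** Pi) ** (- (Pi ** Kb ** Pi)) ** (Pi ** Kbi ** R ** E)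
      = E ** (S ** Kbi ** G ** R) ** E" .
  have 2: "E ** (mat 1 - S ** Kbi ** G ** R) ** (- E) = mat 1 + E ** (S ** Kbi ** G ** R) ** E"
    by (simp add: mm_diff_ldistrib mm_diff_rdistrib mm_uminus_right EE)
  show ?thesis unfolding 1 2 ..
qed

lemma adj2:
  fixes J :: "complex^2^2"
  shows "J ** (\<chi> i j. if i = 1 \<and> j = 1 then J$2$2 else if i = 1 \<and> j = 2 then - J$1$2
                 else if i = 2 \<and> j = 1 then - J$2$1 else J$1$1) = mat (det J)"
  by (simp add: det_2 mat_def matrix_matrix_mult_def vec_eq_iff sum_2 forall_2 algebra_simps)

context
  fixes K :: "complex^'n^'n"
  assumes K_inv: "invertible K"
begin

lemma Kbi_rb: "Kbi K ** rb K r = colblk (col1 (matrix_inv K *v r)) (col2 (- vconj r))"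
proof -
  have "mconj K *v (Lm K *v vconj r) = vconj r"
    using Lm_facts(3)[OF K_inv] by (simp add: matrix_vector_mul_assoc)
  then show ?thesis
    by (simp add: Kbi_def rb_def blk_colblk mult_col mm_uminus_left col_uminus neg_mv)
qed

lemma sb_Kbi: "sb K s ** Kbi K = rowblk (row2 (s v* matrix_inv K)) (row1 (vconj s))"
proof -
  have "vconj s v* Lm K v* mconj K = vconj s"
    using Lm_facts(2)[OF K_inv] by (simp add: vector_matrix_mul_assoc)
  then show ?thesis
    by (simp add: Kbi_def sb_def rowblk_blk row_mult mm_uminus_right mm_uminus_left row_uminus vm_neg)
qed

lemma conj_rb: "mconj (rb K r) = Pim ** Kbi K ** rb K r ** Em"
proof -
  have 1: "mconj (rb K r) = colblk (col1 (vconj r)) (col2 (matrix_inv K *v r))"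
    using Lm_facts(4)[OF K_inv] by (simp add: rb_def colblk_mconj col_mconj vconj_mv)
  have "Pim ** Kbi K ** rb K r ** Em = Pim ** (Kbi K ** rb K r) ** Em"
    by (simp add: matrix_mul_assoc)
  also have "\<dots> = colblk (col1 (vconj r)) (col2 (matrix_inv K *v r))"
    unfolding Kbi_rb by (simp add: Pim_colblk colblk_mult col_Em col_uminus mm_uminus_left)
  finally show ?thesis using 1 by simp
qed

lemma conj_Kbi: "mconj (Kbi K) = - (Pim ** Kb K ** Pim)"
proof -
  have "mconj (matrix_inv K) = Lm K" using invertible_mconj[OF K_inv] by (simp add: Lm_def)
  then show ?thesis by (simp add: Kbi_def Kb_def blk_mconj Pim_blk blk_uminus mconj_uminus)
qed

lemma conj_sb: "mconj (sb K s) = - (Em ** sb K s ** Kbi K ** Pim)"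
proof -
  have 1: "mconj (sb K s) = rowblk (row2 (vconj s)) (- row1 (s v* matrix_inv K))"
    using Lm_facts(4)[OF K_inv] by (simp add: sb_def rowblk_mconj row_mconj vconj_vm row_uminus mconj_uminus)
  have "Em ** sb K s ** Kbi K ** Pim = Em ** ((sb K s ** Kbi K) ** Pim)"
    by (simp add: matrix_mul_assoc)
  also have "\<dots> = rowblk (- row2 (vconj s)) (row1 (s v* matrix_inv K))"
    unfolding sb_Kbi by (simp add: rowblk_Pim mult_rowblk Em_row)
  finally show ?thesis using 1 by (simp add: rowblk_uminus)
qed

end


definition Qm :: "complex^'n^'n \<Rightarrow> complex^'n^'n" where
  "Qm M = matrix_inv (mat 1 - mconj M ** M)"
definition Q2m :: "complex^'n^'n \<Rightarrow> complex^'n^'n" where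
  "Q2m M = mat 1 + M ** Qm M ** mconj M"

lemma dmat_blk: "det (blk (mat 1 :: complex^2^2) 0 0 (X ** Y)) =
   det (blk (mat 1 :: complex^2^2) 0 0 X) * det (blk (mat 1 :: complex^2^2) 0 0 Y)"
  by (simp add: det_mul[symmetric] blk_mult)

context
  fixes M :: "complex^'n^'n"
  assumes Minv: "invertible (mat 1 - mconj M ** M)"
begin

lemma Q_facts: "(mat 1 - mconj M ** M) ** Qm M = mat 1" "Qm M ** (mat 1 - mconj M ** M) = mat 1"
  using minv[OF Minv] by (simp_all add: Qm_def)

lemma Q_eq: "Qm M - mconj M ** M ** Qm M = mat 1"
  using Q_facts(1) by (simp add: mm_diff_rdistrib)

lemma Q2_inv: "matrix_inv (mat 1 - M ** mconj M) = Q2m M"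
proof (rule minv_unique)
  have "(mat 1 - M ** mconj M) ** Q2m M
      = mat 1 - M ** mconj M + M ** (Qm M - mconj M ** M ** Qm M) ** mconj M"
    by (simp add: Q2m_def matrix_add_ldistrib mm_diff_rdistrib mm_diff_ldistrib matrix_mul_assoc
        algebra_simps)
  also have "\<dots> = mat 1" by (simp add: Q_eq)
  finally show "(mat 1 - M ** mconj M) ** Q2m M = mat 1" .
qed

lemma N_blk: "mat 1 - Mb M = blk (mat 1) (- M) (- mconj M) (mat 1)"
  by (simp add: Mb_def blk_one blk_diff)

lemma NG: "(mat 1 - Mb M) ** blk (Q2m M) (M ** Qm M) (Qm M ** mconj M) (Qm M) = mat 1"
proof -
  have a: "mat 1 ** Q2m M + - M ** (Qm M ** mconj M) = mat 1"
    by (simp add: Q2m_def mm_uminus_left matrix_mul_assoc)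
  have b: "mat 1 ** (M ** Qm M) + - M ** Qm M = 0"
    by (simp add: mm_uminus_left)
  have c: "- mconj M ** Q2m M + mat 1 ** (Qm M ** mconj M) = 0"
  proof -
    have "- mconj M ** Q2m M + mat 1 ** (Qm M ** mconj M)
        = (Qm M - mconj M ** M ** Qm M - mat 1) ** mconj M"
      by (simp add: Q2m_def mm_uminus_left matrix_add_ldistrib mm_add_rdistrib mm_diff_rdistrib
          matrix_mul_assoc algebra_simps)
    then show ?thesis by (simp add: Q_eq)
  qed
  have d: "- mconj M ** (M ** Qm M) + mat 1 ** Qm M = mat 1"
    using Q_eq by (simp add: mm_uminus_left matrix_mul_assoc algebra_simps)
  show ?thesis unfolding N_blk blk_mult a b c d by (simp add: blk_one)
qed

lemma G_eq: "Gm M = blk (Q2m M) (M ** Qm M) (Qm M ** mconj M) (Qm M)"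
  unfolding Gm_def by (rule minv_unique[OF NG])

lemma N_inv: "invertible (mat 1 - Mb M)"
  using NG invertible_iff_right by blast

lemma NG2: "(mat 1 - Mb M) ** Gm M = mat 1" "Gm M ** (mat 1 - Mb M) = mat 1"
  using minv[OF N_inv] by (simp_all add: Gm_def)

lemma conj_G: "mconj (Gm M) = Pim ** Gm M ** Pim"
proof -
  have cN: "mconj (mat 1 - Mb M) = Pim ** (mat 1 - Mb M) ** Pim"
    by (simp add: N_blk blk_mconj Pim_blk mconj_uminus)
  have "mconj (Gm M) ** mconj (mat 1 - Mb M) = mat 1"
    using NG2(2) by (simp add: mconj_mult[symmetric])
  then have e1: "mconj (Gm M) ** Pim ** (mat 1 - Mb M) ** Pim = mat 1"
    unfolding cN by (simp add: matrix_mul_assoc)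
  have "Pim ** mconj (Gm M) ** Pim ** (mat 1 - Mb M)
      = Pim ** (mconj (Gm M) ** Pim ** (mat 1 - Mb M) ** Pim) ** Pim"
    by (simp add: matrix_mul_assoc mm_cancel[OF Pim_Pim])
  also have "\<dots> = mat 1" using e1 by (simp add: Pim_Pim)
  finally have "Pim ** mconj (Gm M) ** Pim ** (mat 1 - Mb M) = mat 1" .
  then have "matrix_inv (mat 1 - Mb M) = Pim ** mconj (Gm M) ** Pim"
    by (rule minv_unique_left)
  then have "Pim ** Gm M ** Pim = Pim ** (Pim ** mconj (Gm M) ** Pim) ** Pim"
    by (simp add: Gm_def)
  also have "\<dots> = mconj (Gm M)"
    by (simp add: matrix_mul_assoc mm_cancel[OF Pim_Pim] Pim_Pim)
  finally show ?thesis by simp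
qed

end


locale pt =
  fixes K :: "complex^'n^'n" and M :: "complex^'n^'n" and r s :: "complex^'n"
  assumes K_inv: "invertible K"
    and Meq: "K ** M + M ** Lm K = - (outer r (vconj s) ** Lm K)"
    and Minv: "invertible (mat 1 - mconj M ** M)"
begin

lemma J_facts:
  "Jm K r s M ** (mat 1 - Ym K r s M) = mat 1"
  "Gm M ** Kbi K ** rb K r ** (mat 1 - Ym K r s M) = Kbi K ** Gm M ** rb K r"
  "mat 1 + Gm M ** Kbi K ** rb K r ** sb K s = Gm M ** Kbi K ** (mat 1 - Mb M) ** Kb K"
  using Jinv_generic[OF Kb_Kbi[OF K_inv] NG2[OF Minv] comm_rel[OF K_inv Meq]]
  by (simp_all add: Jm_def Ym_def)

lemma det_J: "det (Jm K r s M) = 1"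
proof -
  let ?d = "\<lambda>X. det (blk (mat 1 :: complex^2^2) 0 0 X)"
  have "Jm K r s M = mat 1 + sb K s ** (Gm M ** Kbi K ** rb K r)"
    by (simp add: Jm_def matrix_mul_assoc)
  then have "det (Jm K r s M) = ?d (mat 1 + Gm M ** Kbi K ** rb K r ** sb K s)"
    using det_sylv by simp
  also have "\<dots> = ?d (Gm M ** Kbi K ** (mat 1 - Mb M) ** Kb K)"
    using J_facts(3) by simp
  also have "\<dots> = ?d (Gm M) * ?d (Kbi K) * ?d (mat 1 - Mb M) * ?d (Kb K)"
    by (simp add: dmat_blk)
  also have "\<dots> = ?d (Gm M ** (mat 1 - Mb M)) * ?d (Kbi K ** Kb K)"
    by (simp add: dmat_blk)
  also have "\<dots> = 1"
    using NG2(2)[OF Minv] Kb_Kbi(2)[OF K_inv] by (simp add: blk_one[symmetric])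
  finally show ?thesis .
qed

lemma conj_J: "mconj (Jm K r s M) = Em ** (mat 1 - Ym K r s M) ** (- Em)"
proof -
  have "mconj (Jm K r s M) = mat 1 + mconj (sb K s) ** mconj (Gm M) ** mconj (Kbi K) ** mconj (rb K r)"
    by (simp add: Jm_def mconj_add mconj_mult)
  also have "\<dots> = mat 1 + (- (Em ** sb K s ** Kbi K ** Pim)) ** (Pim ** Gm M ** Pim)
        ** (- (Pim ** Kb K ** Pim)) ** (Pim ** Kbi K ** rb K r ** Em)"
    by (simp add: conj_sb[OF K_inv] conj_G[OF Minv] conj_Kbi[OF K_inv] conj_rb[OF K_inv])
  also have "\<dots> = Em ** (mat 1 - Ym K r s M) ** (- Em)"
    unfolding Ym_def by (rule conj_generic[OF Pim_Pim Kb_Kbi(1)[OF K_inv] Em_Em])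
  finally show ?thesis .
qed

lemma herm_J: "cnj (Jm K r s M $ i $ j) = Jm K r s M $ j $ i"
proof -
  let ?J = "Jm K r s M"
  let ?A = "(\<chi> i j. if i = 1 \<and> j = 1 then ?J$2$2 else if i = 1 \<and> j = 2 then - ?J$1$2
                 else if i = 2 \<and> j = 1 then - ?J$2$1 else ?J$1$1) :: complex^2^2"
  have "?J ** ?A = mat 1" using adj2[of ?J] det_J by simp
  then have "matrix_inv ?J = ?A" by (rule minv_unique)
  moreover have "matrix_inv ?J = mat 1 - Ym K r s M" using J_facts(1) by (rule minv_unique)
  ultimately have "mconj ?J = Em ** ?A ** (- Em)" using conj_J by simp
  then have "mconj ?J $ i $ j = (Em ** ?A ** (- Em)) $ i $ j" by simp
  then show ?thesis
    using exhaust_2[of i] exhaust_2[of j]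
    by (auto simp: mconj_def Em_def matrix_matrix_mult_def sum_2)
qed

lemma J_expand: "Jm K r s M = mat 1 + rowblk (row2 s) (row1 (- (vconj s v* Lm K)))
   ** blk (Q2m M) (M ** Qm M) (Qm M ** mconj M) (Qm M)
   ** colblk (col1 (matrix_inv K *v r)) (col2 (- vconj r))"
proof -
  have "Jm K r s M = mat 1 + sb K s ** Gm M ** (Kbi K ** rb K r)"
    by (simp add: Jm_def matrix_mul_assoc)
  then show ?thesis by (simp only: Kbi_rb[OF K_inv] G_eq[OF Minv] sb_def)
qed

lemma neg_vm: "(- x) v* (A::complex^'a^'b) = - (x v* A)"
  by (simp add: vector_matrix_mult_def vec_eq_iff sum_negf)

lemma J_entries:
  "Jm K r s M $ 1 $ 1 = 1 - s1_val K r s M"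
  "Jm K r s M $ 2 $ 1 = s3_val K r s M"
  "Jm K r s M $ 2 $ 2 = 1 - s4_val K r s M"
proof -
  let ?a = "matrix_inv K *v r" and ?b = "vconj r" and ?sg = "vconj s v* Lm K"
  have X: "Jm K r s M = mat 1 + (row2 (s v* Q2m M) ** col1 ?a - row1 (?sg v* (Qm M ** mconj M)) ** col1 ?a
           - (row2 (s v* (M ** Qm M)) ** col2 ?b - row1 (?sg v* Qm M) ** col2 ?b))"
    unfolding J_expand
    by (simp add: rowblk_blk rowblk_colblk row_mult mm_add_rdistrib mm_diff_rdistrib row_uminus
        col_uminus mm_uminus_left mm_uminus_right neg_vm algebra_simps)
  have e11: "Jm K r s M $ 1 $ 1 = 1 - bil (?sg v* (Qm M ** mconj M)) ?a"
    unfolding X by (simp add: row_col_prods mat_def)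
  have e21: "Jm K r s M $ 2 $ 1 = bil (s v* Q2m M) ?a"
    unfolding X by (simp add: row_col_prods mat_def)
  have e22: "Jm K r s M $ 2 $ 2 = 1 - bil (s v* (M ** Qm M)) ?b"
    unfolding X by (simp add: row_col_prods mat_def)
  show "Jm K r s M $ 1 $ 1 = 1 - s1_val K r s M"
    unfolding e11 s1_val_def Lm_def Qm_def
    by (simp add: bil_vm vector_matrix_mul_assoc matrix_vector_mul_assoc matrix_mul_assoc)
  show "Jm K r s M $ 2 $ 1 = s3_val K r s M"
    unfolding e21 s3_val_def Q2_inv[OF Minv]
    by (simp add: bil_vm matrix_vector_mul_assoc)
  show "Jm K r s M $ 2 $ 2 = 1 - s4_val K r s M"
    unfolding e22 s4_val_def Qm_def
    by (simp add: bil_vm)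
qed

lemma v_eq: "vmat K r s M = gam ** Jm K r s M ** gam"
proof -
  have h: "Jm K r s M $ 1 $ 2 = cnj (s3_val K r s M)"
    using herm_J[of 2 1] J_entries(2) by simp
  show ?thesis
    using J_entries h
    by (simp add: vmat_def gam_def matrix_matrix_mult_def vec_eq_iff forall_2 sum_2)
qed

lemma s_real: "cnj (s1_val K r s M) = s1_val K r s M" "cnj (s4_val K r s M) = s4_val K r s M"
  using herm_J[of 1 1] herm_J[of 2 2] J_entries by (simp_all add: complex_eq_iff)

lemma adj_v: "adj (vmat K r s M) = vmat K r s M"
  using s_real by (simp add: adj_def mconj_def transpose_def vmat_def vec_eq_iff forall_2)

lemma det_v: "det (vmat K r s M) = 1"
proof -
  have "det (vmat K r s M) = det gam * det (Jm K r s M) * det gam"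
    by (simp add: v_eq det_mul)
  also have "\<dots> = 1" using det_J by (simp add: det_2 gam_def)
  finally show ?thesis .
qed
end


lemma cmod_sq: "(complex_of_real (cmod z))^2 = z * cnj z"
  using complex_norm_square[of z] by simp

lemma herm2_def:
  fixes v :: "complex^2^2"
  assumes h11: "cnj (v$1$1) = v$1$1" and h22: "cnj (v$2$2) = v$2$2"
    and h12: "v$1$2 = cnj (v$2$1)" and d: "det v = 1"
  shows "pos_def v \<or> neg_def v"
proof -
  define \<alpha> where "\<alpha> = Re (v$1$1)"
  define \<delta> where "\<delta> = Re (v$2$2)"
  define c where "c = v$2$1"
  have a: "v$1$1 = of_real \<alpha>" using h11 by (simp add: \<alpha>_def complex_eq_iff)
  have dd: "v$2$2 = of_real \<delta>" using h22 by (simp add: \<delta>_def complex_eq_iff)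
  have detc: "of_real \<alpha> * of_real \<delta> - c * cnj c = (1::complex)"
    using d by (simp add: det_2 a dd h12 c_def mult.commute)
  have detr: "\<alpha> * \<delta> - (cmod c)^2 = 1"
  proof -
    have "of_real (\<alpha> * \<delta> - (cmod c)^2) = (of_real \<alpha> * of_real \<delta> - c * cnj c :: complex)"
      by (simp add: cmod_sq)
    then show ?thesis using detc by (metis of_real_eq_1_iff)
  qed
  have a0: "\<alpha> \<noteq> 0"
  proof
    assume "\<alpha> = 0"
    then have "(cmod c)^2 = -1" using detr by simp
    moreover have "(cmod c)^2 \<ge> 0" by simp
    ultimately show False by linarith
  qed
  define R where "R x = (cmod (of_real \<alpha> * x$1 + cnj c * x$2))^2 + (cmod (x$2))^2" for x :: "complex^2"
  have key: "of_real \<alpha> * bil (vconj x) (v *v x) = of_real (R x)" for x :: "complex^2"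
  proof -
    have "of_real \<alpha> * bil (vconj x) (v *v x) - of_real (R x)
        = (of_real \<alpha> * of_real \<delta> - c * cnj c - 1) * (x$2 * cnj (x$2))"
      by (simp add: R_def bil_def vconj_def matrix_vector_mult_def sum_2 a dd h12 c_def[symmetric]
          cmod_sq algebra_simps)
    then show ?thesis using detc by simp
  qed
  have Rpos: "R x > 0" if "x \<noteq> 0" for x :: "complex^2"
  proof (cases "x$2 = 0")
    case True
    with that have "x$1 \<noteq> 0" by (auto simp: vec_eq_iff forall_2)
    then have "cmod (of_real \<alpha> * x$1 + cnj c * x$2) > 0" using True a0 by simp
    then show ?thesis unfolding R_def by (simp add: add_pos_nonneg)
  next
    case False
    then have "cmod (x$2) > 0" by simp
    then show ?thesis unfolding R_def by (simp add: add_nonneg_pos)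
  qed
  have q: "bil (vconj x) (v *v x) = of_real (R x / \<alpha>)" for x :: "complex^2"
  proof -
    have "bil (vconj x) (v *v x) = of_real \<alpha> * bil (vconj x) (v *v x) / of_real \<alpha>"
      using a0 by simp
    also have "\<dots> = of_real (R x / \<alpha>)" unfolding key by simp
    finally show ?thesis .
  qed
  show ?thesis
  proof (cases "\<alpha> > 0")
    case True
    then have "pos_def v" unfolding pos_def_def using q Rpos by simp
    then show ?thesis ..
  next
    case False
    with a0 have "\<alpha> < 0" by simp
    then have "neg_def v" unfolding neg_def_def using q Rpos by (simp add: divide_pos_neg)
    then show ?thesis ..
  qed
qed

context pt
begin

lemma def_v: "pos_def (vmat K r s M) \<or> neg_def (vmat K r s M)"
proof (rule herm2_def)
  have "adj (vmat K r s M) $ i $ j = vmat K r s M $ i $ j" for i j using adj_v by simp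
  then have h: "cnj (vmat K r s M $ j $ i) = vmat K r s M $ i $ j" for i j
    by (simp add: adj_def mconj_def transpose_def)
  show "cnj (vmat K r s M $ 1 $ 1) = vmat K r s M $ 1 $ 1" using h[of 1 1] .
  show "cnj (vmat K r s M $ 2 $ 2) = vmat K r s M $ 2 $ 2" using h[of 2 2] .
  show "vmat K r s M $ 1 $ 2 = cnj (vmat K r s M $ 2 $ 1)" using arg_cong[OF h[of 1 2], of cnj] by simp
  show "det (vmat K r s M) = 1" by (rule det_v)
qed

end


lemma comm_minv:
  fixes A B :: "complex^'n^'n"
  assumes "A ** B = B ** A" "invertible B"
  shows "A ** matrix_inv B = matrix_inv B ** A"
proof -
  have "A ** matrix_inv B = matrix_inv B ** (B ** A) ** matrix_inv B"
    using minv[OF assms(2)] by (simp add: matrix_mul_assoc)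
  also have "\<dots> = matrix_inv B ** (A ** B) ** matrix_inv B" using assms(1) by simp
  also have "\<dots> = matrix_inv B ** A"
    using minv[OF assms(2)] by (simp add: matrix_mul_assoc[symmetric])
  finally show ?thesis .
qed

lemma mpow_comm:
  fixes A K :: "complex^'n^'n"
  assumes "A ** K = K ** A" shows "mpow A m ** K = K ** mpow A m"
proof (induction m)
  case 0 then show ?case by simp
next
  case (Suc m)
  have "mpow A (Suc m) ** K = A ** (mpow A m ** K)" by (simp add: mpow_Suc matrix_mul_assoc)
  also have "\<dots> = A ** K ** mpow A m" using Suc by (simp add: matrix_mul_assoc)
  also have "\<dots> = K ** mpow A (Suc m)" using assms by (simp add: mpow_Suc matrix_mul_assoc)
  finally show ?case .
qed

lemma transpose_add: "transpose (A + B) = transpose A + transpose (B::'a::monoid_add^'n^'m)"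
  by (simp add: transpose_def vec_eq_iff)

lemma transpose_diff: "transpose (A - B) = transpose A - transpose (B::'a::ab_group_add^'n^'m)"
  by (simp add: transpose_def vec_eq_iff)

lemma transpose_msmult: "transpose (msmult c A) = msmult c (transpose A)"
  by (simp add: transpose_def msmult_def vec_eq_iff)

lemma transpose_mpow: "transpose (mpow A m) = mpow (transpose A) m"
proof (induction m)
  case 0 then show ?case by simp
next
  case (Suc m)
  have "transpose (mpow A (Suc m)) = transpose (mpow A m) ** transpose A"
    by (simp add: mpow_Suc matrix_transpose_mul)
  also have "\<dots> = mpow (transpose A) m ** transpose A" using Suc by simp
  also have "\<dots> = transpose A ** mpow (transpose A) m" by (simp add: mpow_comm)
  finally show ?case by (simp add: mpow_Suc)
qed

lemma transpose_minv:
  fixes K :: "complex^'n^'n"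
  assumes "invertible K" shows "matrix_inv (transpose K) = transpose (matrix_inv K)"
proof (rule minv_unique)
  show "transpose K ** transpose (matrix_inv K) = mat 1"
    using minv_left[OF assms] by (simp add: matrix_transpose_mul[symmetric])
qed

lemma mconj_mpow: "mconj (mpow A m) = mpow (mconj A) m"
  by (induction m) (simp_all add: mpow_Suc mconj_mult)

lemma transpose_vec: "transpose (A::complex^'n^'m) *v x = x v* A"
  by simp

lemma bb_outer: "bounded_bilinear (outer :: complex^'n \<Rightarrow> complex^'n \<Rightarrow> complex^'n^'n)"
proof -
  have "bilinear (outer :: complex^'n \<Rightarrow> complex^'n \<Rightarrow> complex^'n^'n)"
    unfolding bilinear_def
    by (auto intro!: linearI simp: outer_def vec_eq_iff algebra_simps)
  then show ?thesis by (simp add: bilinear_conv_bounded_bilinear)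
qed

lemma bl_mmr: "bounded_linear (\<lambda>X::complex^'n^'m. X ** (B::complex^'p^'n))"
  by (rule bounded_bilinear.bounded_linear_left[OF bb_mm])

lemma bl_mml: "bounded_linear (\<lambda>X::complex^'n^'m. (B::complex^'m^'p) ** X)"
  by (rule bounded_bilinear.bounded_linear_right[OF bb_mm])


definition Axi :: "complex^'n^'n \<Rightarrow> nat \<Rightarrow> complex^'n^'n" where
  "Axi K m = mpow K m + msmult ((-1)^(m+1)) (mpow (matrix_inv K) m)"
definition Aeta :: "complex^'n^'n \<Rightarrow> nat \<Rightarrow> complex^'n^'n" where
  "Aeta K m = msmult \<i> (mpow K m - msmult ((-1)^(m+1)) (mpow (matrix_inv K) m))"
definition Ag :: "complex^'n^'n \<Rightarrow> bool \<Rightarrow> nat \<Rightarrow> complex^'n^'n" where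
  "Ag K d m = (if d then Axi K m else Aeta K m)"
definition lpt :: "bool \<Rightarrow> nat \<Rightarrow> (nat\<Rightarrow>real) \<Rightarrow> (nat\<Rightarrow>real) \<Rightarrow> real \<Rightarrow> (nat\<Rightarrow>real) \<times> (nat\<Rightarrow>real)" where
  "lpt d m x y t = (if d then (x(m:=t), y) else (x, y(m:=t)))"
definition lv :: "bool \<Rightarrow> nat \<Rightarrow> (nat\<Rightarrow>real) \<Rightarrow> (nat\<Rightarrow>real) \<Rightarrow> real" where
  "lv d m x y = (if d then x m else y m)"
definition Tsyl :: "complex^'n^'n \<Rightarrow> complex^'n^'n \<Rightarrow> complex^'n^'n" where
  "Tsyl K X = K ** X + X ** Lm K"

lemma lpt_base: "lpt d m x y (lv d m x y) = (x, y)"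
  by (simp add: lpt_def lv_def)

lemma lpt_shift: "lpt d m (fst (lpt d m x y t)) (snd (lpt d m x y t)) = lpt d m x y"
  by (rule ext) (simp add: lpt_def)

lemma lv_shift: "lv d m (fst (lpt d m x y t)) (snd (lpt d m x y t)) = t"
  by (simp add: lpt_def lv_def)

lemma comm_msmult:
  fixes A B K :: "complex^'n^'n"
  shows "A ** K = K ** A \<Longrightarrow> msmult c A ** K = K ** msmult c A"
  by (simp add: msmult_mult_left[symmetric] msmult_mult_right[symmetric])

lemma comm_add:
  fixes A B K :: "complex^'n^'n"
  shows "A ** K = K ** A \<Longrightarrow> B ** K = K ** B \<Longrightarrow> (A + B) ** K = K ** (A + B)"
  by (simp add: mm_add_rdistrib matrix_add_ldistrib)

lemma comm_diff:
  fixes A B K :: "complex^'n^'n"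
  shows "A ** K = K ** A \<Longrightarrow> B ** K = K ** B \<Longrightarrow> (A - B) ** K = K ** (A - B)"
  by (simp add: mm_diff_rdistrib mm_diff_ldistrib)

lemma Ag_comm:
  fixes K :: "complex^'n^'n"
  assumes "invertible K"
  shows "Ag K d m ** K = K ** Ag K d m"
proof -
  have k: "mpow K m ** K = K ** mpow K m" by (rule mpow_comm) simp
  have "matrix_inv K ** K = K ** matrix_inv K" using minv[OF assms] by simp
  then have ki: "mpow (matrix_inv K) m ** K = K ** mpow (matrix_inv K) m" by (rule mpow_comm)
  show ?thesis
    by (simp add: Ag_def Axi_def Aeta_def comm_add comm_diff comm_msmult k ki)
qed

lemma Ag_comm_conj:
  fixes K :: "complex^'n^'n"
  assumes "invertible K"
  shows "mconj (Ag K d m) ** Lm K = Lm K ** mconj (Ag K d m)"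
proof -
  have "mconj (Ag K d m) ** mconj K = mconj K ** mconj (Ag K d m)"
    using Ag_comm[OF assms] by (simp add: mconj_mult[symmetric])
  then show ?thesis unfolding Lm_def
    by (rule comm_minv) (rule invertible_mconj[OF assms])
qed

lemma Ag_comm_inv:
  fixes K :: "complex^'n^'n"
  assumes "invertible K"
  shows "Ag K d m ** matrix_inv K = matrix_inv K ** Ag K d m"
  by (rule comm_minv[OF Ag_comm[OF assms] assms])

locale sdl =
  fixes K :: "complex^'n^'n"
    and r s :: "(nat \<Rightarrow> real) \<Rightarrow> (nat \<Rightarrow> real) \<Rightarrow> complex^'n"
    and M :: "(nat \<Rightarrow> real) \<Rightarrow> (nat \<Rightarrow> real) \<Rightarrow> complex^'n^'n"
  assumes K_inv: "invertible K"
    and K_spec: "\<not> (\<exists>\<mu>. is_eigenvalue K \<mu> \<and> is_eigenvalue (- matrix_inv (mconj K)) \<mu>)"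
    and M_eq: "\<And>xi eta. K ** M xi eta + M xi eta ** matrix_inv (mconj K)
                 = - (outer (r xi eta) (vconj (s xi eta)) ** matrix_inv (mconj K))"
    and r_xi: "\<And>n xi eta. n \<ge> 1 \<Longrightarrow>
       ((\<lambda>t. r (xi(n := t)) eta) has_vector_derivative
          ((mpow K n + msmult ((-1)^(n+1)) (mpow (matrix_inv K) n)) *v r xi eta)) (at (xi n))"
    and r_eta: "\<And>n xi eta. n \<ge> 1 \<Longrightarrow>
       ((\<lambda>t. r xi (eta(n := t))) has_vector_derivative
          (msmult \<i> (mpow K n - msmult ((-1)^(n+1)) (mpow (matrix_inv K) n)) *v r xi eta)) (at (eta n))"
    and s_xi: "\<And>n xi eta. n \<ge> 1 \<Longrightarrow>
       ((\<lambda>t. s (xi(n := t)) eta) has_vector_derivative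
          ((mpow (transpose K) n + msmult ((-1)^(n+1)) (mpow (matrix_inv (transpose K)) n))
             *v s xi eta)) (at (xi n))"
    and s_eta: "\<And>n xi eta. n \<ge> 1 \<Longrightarrow>
       ((\<lambda>t. s xi (eta(n := t))) has_vector_derivative
          (msmult \<i> (mpow (transpose K) n - msmult ((-1)^(n+1)) (mpow (matrix_inv (transpose K)) n))
             *v s xi eta)) (at (eta n))"
begin

lemma Meq': "K ** M x y + M x y ** Lm K = - (outer (r x y) (vconj (s x y)) ** Lm K)"
  using M_eq by (simp add: Lm_def)

lemma r_line:
  assumes "1 \<le> m"
  shows "((\<lambda>\<tau>. case_prod r (lpt d m x y \<tau>)) has_vector_derivative
           (Ag K d m *v case_prod r (lpt d m x y t))) (at t)"
proof (cases d)
  case True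
  have "((\<lambda>\<tau>. r ((x(m:=t))(m := \<tau>)) y) has_vector_derivative (Axi K m *v r (x(m:=t)) y)) (at ((x(m:=t)) m))"
    using r_xi[OF assms, of "x(m:=t)" y] by (simp add: Axi_def)
  then show ?thesis using True by (simp add: lpt_def Ag_def)
next
  case False
  have "((\<lambda>\<tau>. r x ((y(m:=t))(m := \<tau>))) has_vector_derivative (Aeta K m *v r x (y(m:=t)))) (at ((y(m:=t)) m))"
    using r_eta[OF assms, of x "y(m:=t)"] by (simp add: Aeta_def)
  then show ?thesis using False by (simp add: lpt_def Ag_def)
qed

lemma transpose_Ag:
  "transpose (Axi K m) = mpow (transpose K) m + msmult ((-1)^(m+1)) (mpow (matrix_inv (transpose K)) m)"
  "transpose (Aeta K m) = msmult \<i> (mpow (transpose K) m - msmult ((-1)^(m+1)) (mpow (matrix_inv (transpose K)) m))"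
  by (simp_all add: Axi_def Aeta_def transpose_add transpose_diff transpose_msmult transpose_mpow
      transpose_minv[OF K_inv])

lemma s_line:
  assumes "1 \<le> m"
  shows "((\<lambda>\<tau>. case_prod s (lpt d m x y \<tau>)) has_vector_derivative
           (transpose (Ag K d m) *v case_prod s (lpt d m x y t))) (at t)"
proof (cases d)
  case True
  have "((\<lambda>\<tau>. s ((x(m:=t))(m := \<tau>)) y) has_vector_derivative (transpose (Axi K m) *v s (x(m:=t)) y)) (at ((x(m:=t)) m))"
    using s_xi[OF assms, of "x(m:=t)" y] by (simp add: transpose_Ag)
  then show ?thesis using True by (simp add: lpt_def Ag_def)
next
  case False
  have "((\<lambda>\<tau>. s x ((y(m:=t))(m := \<tau>))) has_vector_derivative (transpose (Aeta K m) *v s x (y(m:=t)))) (at ((y(m:=t)) m))"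
    using s_eta[OF assms, of x "y(m:=t)"] by (simp add: transpose_Ag)
  then show ?thesis using False by (simp add: lpt_def Ag_def)
qed

lemma syl_inj: "inj (Tsyl K)"
proof (rule injI)
  fix X Y assume "Tsyl K X = Tsyl K Y"
  then have "K ** X + X ** Lm K = K ** Y + Y ** Lm K" by (simp add: Tsyl_def)
  then have "K ** (X - Y) = (X - Y) ** (- Lm K)"
    by (simp add: mm_diff_ldistrib mm_diff_rdistrib mm_uminus_right algebra_simps)
  then have "X - Y = 0"
    by (rule sylvester_kernel) (use K_spec in \<open>simp add: Lm_def\<close>)
  then show "X = Y" by simp
qed

lemma syl_lin: "linear (Tsyl K)"
  by (auto intro!: linearI simp: Tsyl_def matrix_add_ldistrib mm_add_rdistrib matrix_scalar_ac
      scalar_matrix_assoc[symmetric] scaleR_add_right)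

lemma syl_ginv: "\<exists>g. bounded_linear g \<and> (\<forall>X. g (Tsyl K X) = X)"
proof -
  obtain h where "linear h" "h \<circ> Tsyl K = id"
    using linear_injective_left_inverse[OF syl_lin syl_inj] by blast
  then show ?thesis by (auto simp: linear_conv_bounded_linear fun_eq_iff)
qed

lemma M_line:
  assumes "1 \<le> m"
  shows "((\<lambda>\<tau>. case_prod M (lpt d m x y \<tau>)) has_vector_derivative
           (Ag K d m ** case_prod M (lpt d m x y t) + case_prod M (lpt d m x y t) ** mconj (Ag K d m))) (at t)"
proof -
  obtain g where g: "bounded_linear g" "\<And>X. g (Tsyl K X) = X" using syl_ginv by blast
  let ?A = "Ag K d m"
  let ?R = "\<lambda>\<tau>. case_prod r (lpt d m x y \<tau>)"
  let ?S = "\<lambda>\<tau>. case_prod s (lpt d m x y \<tau>)"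
  let ?M = "\<lambda>\<tau>. case_prod M (lpt d m x y \<tau>)"
  let ?rhs = "\<lambda>\<tau>. - (outer (?R \<tau>) (vconj (?S \<tau>)) ** Lm K)"
  have Mg: "?M \<tau> = g (?rhs \<tau>)" for \<tau>
  proof -
    have "Tsyl K (?M \<tau>) = ?rhs \<tau>" using Meq' by (simp add: Tsyl_def split: prod.split)
    then show ?thesis using g(2) by metis
  qed
  have hR: "(?R has_vector_derivative (?A *v ?R t)) (at t)" by (rule r_line[OF assms])
  have hS: "((\<lambda>\<tau>. vconj (?S \<tau>)) has_vector_derivative vconj (transpose ?A *v ?S t)) (at t)"
    by (rule hvd_vconj[OF s_line[OF assms]])
  have hO: "((\<lambda>\<tau>. outer (?R \<tau>) (vconj (?S \<tau>))) has_vector_derivative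
      (outer (?R t) (vconj (transpose ?A *v ?S t)) + outer (?A *v ?R t) (vconj (?S t)))) (at t)"
    by (rule bounded_bilinear.has_vector_derivative[OF bb_outer hR hS])
  let ?O = "outer (?R t) (vconj (?S t))"
  have O': "outer (?R t) (vconj (transpose ?A *v ?S t)) + outer (?A *v ?R t) (vconj (?S t))
      = ?O ** mconj ?A + ?A ** ?O"
    by (simp add: vconj_vm outer_vm mult_outer)
  have hrhs: "(?rhs has_vector_derivative - ((?O ** mconj ?A + ?A ** ?O) ** Lm K)) (at t)"
    using has_vector_derivative_minus[OF bounded_linear.has_vector_derivative[OF bl_mmr hO]] O'
    by simp
  have hM: "((\<lambda>\<tau>. g (?rhs \<tau>)) has_vector_derivative g (- ((?O ** mconj ?A + ?A ** ?O) ** Lm K))) (at t)"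
    by (rule bounded_linear.has_vector_derivative[OF g(1) hrhs])
  have cK: "?A ** K = K ** ?A" by (rule Ag_comm[OF K_inv])
  have cL: "mconj ?A ** Lm K = Lm K ** mconj ?A" by (rule Ag_comm_conj[OF K_inv])
  have "Tsyl K (?A ** ?M t + ?M t ** mconj ?A) = ?A ** (K ** ?M t + ?M t ** Lm K) + (K ** ?M t + ?M t ** Lm K) ** mconj ?A"
    unfolding Tsyl_def
    by (simp add: matrix_add_ldistrib mm_add_rdistrib matrix_mul_assoc cK cL algebra_simps)
       (simp add: matrix_mul_assoc[symmetric] cL)
  also have "\<dots> = - ((?O ** mconj ?A + ?A ** ?O) ** Lm K)"
    using Meq'[of "fst (lpt d m x y t)" "snd (lpt d m x y t)"]
    by (simp add: case_prod_beta mm_uminus_left mm_uminus_right matrix_add_ldistrib mm_add_rdistrib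
        matrix_mul_assoc cL algebra_simps)
       (simp add: matrix_mul_assoc[symmetric] cL)
  finally have "g (- ((?O ** mconj ?A + ?A ** ?O) ** Lm K)) = ?A ** ?M t + ?M t ** mconj ?A"
    using g(2) by metis
  then show ?thesis using hM Mg by simp
qed

end


definition Db :: "complex^'n^'n \<Rightarrow> complex^('n+'n)^('n+'n)" where
  "Db A = blk A 0 0 (mconj A)"

lemma linear_rb: "linear (rb K :: complex^'n \<Rightarrow> _)"
  by (auto intro!: linearI simp: rb_def vec_eq_iff colblk_def col1_def col2_def vconj_def
      matrix_vector_mult_def sum.distrib scaleR_sum_right algebra_simps split: sum.split)

lemma linear_sb: "linear (sb K :: complex^'n \<Rightarrow> _)"
  by (auto intro!: linearI simp: sb_def vec_eq_iff rowblk_def row1_def row2_def vconj_def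
      vector_matrix_mult_def sum.distrib scaleR_sum_right algebra_simps split: sum.split)

lemma linear_Mb: "linear (Mb :: complex^'n^'n \<Rightarrow> _)"
  by (auto intro!: linearI simp: Mb_def vec_eq_iff blk_def mconj_def algebra_simps split: sum.split)

lemma bl_rb: "bounded_linear (rb K :: complex^'n \<Rightarrow> _)"
  using linear_rb linear_conv_bounded_linear by blast

lemma bl_sb: "bounded_linear (sb K :: complex^'n \<Rightarrow> _)"
  using linear_sb linear_conv_bounded_linear by blast

lemma bl_Mb: "bounded_linear (Mb :: complex^'n^'n \<Rightarrow> _)"
  using linear_Mb linear_conv_bounded_linear by blast

lemma neg_vm': "(- x) v* (A::complex^'a^'b) = - (x v* A)"
  by (simp add: vector_matrix_mult_def vec_eq_iff sum_negf)

lemma hvd_eq: "(f has_vector_derivative a) F \<Longrightarrow> a = b \<Longrightarrow> (f has_vector_derivative b) F"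
  by simp

lemma hvd_SGCR:
  fixes S :: "real \<Rightarrow> complex^'m^'k" and G :: "real \<Rightarrow> complex^'m^'m" and R :: "real \<Rightarrow> complex^'k^'m"
  assumes hS: "(S has_vector_derivative S') (at t)" and hG: "(G has_vector_derivative G') (at t)"
    and hR: "(R has_vector_derivative R') (at t)"
  shows "((\<lambda>\<tau>. S \<tau> ** G \<tau> ** C ** R \<tau>) has_vector_derivative
      (S' ** G t ** C ** R t + S t ** G' ** C ** R t + S t ** G t ** C ** R')) (at t)"
proof -
  have h1: "((\<lambda>\<tau>. S \<tau> ** G \<tau>) has_vector_derivative (S t ** G' + S' ** G t)) (at t)"
    by (rule hvd_mm[OF hS hG])
  have h2: "((\<lambda>\<tau>. S \<tau> ** G \<tau> ** C) has_vector_derivative ((S t ** G t) ** 0 + (S t ** G' + S' ** G t) ** C)) (at t)"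
    by (rule hvd_mm[OF h1 has_vector_derivative_const])
  have h3: "((\<lambda>\<tau>. S \<tau> ** G \<tau> ** C ** R \<tau>) has_vector_derivative
      (S t ** G t ** C ** R' + ((S t ** G t) ** 0 + (S t ** G' + S' ** G t) ** C) ** R t)) (at t)"
    by (rule hvd_mm[OF h2 hR])
  show ?thesis by (rule hvd_eq[OF h3]) (simp add: mm_add_rdistrib algebra_simps)
qed

lemma hvd_SGCGR:
  fixes S :: "real \<Rightarrow> complex^'m^'k" and G :: "real \<Rightarrow> complex^'m^'m" and R :: "real \<Rightarrow> complex^'k^'m"
  assumes hS: "(S has_vector_derivative S') (at t)" and hG: "(G has_vector_derivative G') (at t)"
    and hR: "(R has_vector_derivative R') (at t)"
  shows "((\<lambda>\<tau>. S \<tau> ** G \<tau> ** C ** G \<tau> ** R \<tau>) has_vector_derivative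
      (S' ** G t ** C ** G t ** R t + S t ** G' ** C ** G t ** R t + S t ** G t ** C ** G' ** R t
       + S t ** G t ** C ** G t ** R')) (at t)"
proof -
  have h1: "((\<lambda>\<tau>. S \<tau> ** G \<tau> ** C) has_vector_derivative ((S t ** G t) ** 0 + (S t ** G' + S' ** G t) ** C)) (at t)"
    by (rule hvd_mm[OF hvd_mm[OF hS hG] has_vector_derivative_const])
  have h2: "((\<lambda>\<tau>. S \<tau> ** G \<tau> ** C ** G \<tau>) has_vector_derivative
      (S t ** G t ** C ** G' + ((S t ** G t) ** 0 + (S t ** G' + S' ** G t) ** C) ** G t)) (at t)"
    by (rule hvd_mm[OF h1 hG])
  have h3: "((\<lambda>\<tau>. S \<tau> ** G \<tau> ** C ** G \<tau> ** R \<tau>) has_vector_derivative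
      (S t ** G t ** C ** G t ** R' + (S t ** G t ** C ** G' + ((S t ** G t) ** 0 + (S t ** G' + S' ** G t) ** C) ** G t) ** R t)) (at t)"
    by (rule hvd_mm[OF h2 hR])
  show ?thesis by (rule hvd_eq[OF h3]) (simp add: mm_add_rdistrib algebra_simps)
qed

lemma rb_Db:
  assumes "mconj A ** Lm K = Lm K ** mconj A"
  shows "rb K (A *v x) = Db A ** rb K x"
proof -
  have "Lm K *v (mconj A *v vconj x) = mconj A *v (Lm K *v vconj x)"
    using assms by (simp add: matrix_vector_mul_assoc)
  then show ?thesis
    by (simp add: rb_def Db_def blk_colblk mult_col vconj_mv)
qed

lemma sb_Db:
  assumes "mconj A ** Lm K = Lm K ** mconj A"
  shows "sb K (transpose A *v y) = sb K y ** Db A"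
proof -
  have "vconj y v* mconj A v* Lm K = vconj y v* Lm K v* mconj A"
    using assms by (simp add: vector_matrix_mul_assoc)
  then show ?thesis
    by (simp add: sb_def Db_def rowblk_blk row_mult vconj_vm neg_vm' row_uminus mm_uminus_left)
qed

lemma Mb_Db: "Mb (A ** X + X ** mconj A) = Db A ** Mb X + Mb X ** Db A"
  by (simp add: Mb_def Db_def blk_mult blk_add mconj_add mconj_mult)

lemma Db_Kbi:
  fixes K A :: "complex^'n^'n"
  assumes "A ** matrix_inv K = matrix_inv K ** A" "A ** K = K ** A"
  shows "Db A ** Kbi K = Kbi K ** Db A"
proof -
  have "mconj A ** mconj K = mconj K ** mconj A" using assms(2) by (simp add: mconj_mult[symmetric])
  then show ?thesis using assms(1)
    by (simp add: Db_def Kbi_def blk_mult mm_uminus_left mm_uminus_right)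
qed


context sdl
begin

definition "RBp p = rb K (case_prod r p)"
definition "SBp p = sb K (case_prod s p)"
definition "MBp p = Mb (case_prod M p)"
definition "GBp p = Gm (case_prod M p)"
definition "JBp p = Jm K (case_prod r p) (case_prod s p) (case_prod M p)"
definition "Ugood p \<longleftrightarrow> invertible (mat 1 - mconj (case_prod M p) ** case_prod M p)"

lemma pt_at: "Ugood p \<Longrightarrow> pt K (case_prod M p) (case_prod r p) (case_prod s p)"
  unfolding pt_def Ugood_def using K_inv Meq' by (auto split: prod.split)

lemma JBp_def': "JBp p = mat 1 + SBp p ** GBp p ** Kbi K ** RBp p"
  by (simp add: JBp_def Jm_def SBp_def GBp_def RBp_def)

lemma RB_line:
  assumes "1 \<le> m"
  shows "((\<lambda>\<tau>. RBp (lpt d m x y \<tau>)) has_vector_derivative Db (Ag K d m) ** RBp (lpt d m x y t)) (at t)"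
  using bounded_linear.has_vector_derivative[OF bl_rb[of K] r_line[OF assms]]
  unfolding RBp_def rb_Db[OF Ag_comm_conj[OF K_inv]] .

lemma SB_line:
  assumes "1 \<le> m"
  shows "((\<lambda>\<tau>. SBp (lpt d m x y \<tau>)) has_vector_derivative SBp (lpt d m x y t) ** Db (Ag K d m)) (at t)"
  using bounded_linear.has_vector_derivative[OF bl_sb[of K] s_line[OF assms]]
  unfolding SBp_def sb_Db[OF Ag_comm_conj[OF K_inv]] .

lemma MB_line:
  assumes "1 \<le> m"
  shows "((\<lambda>\<tau>. MBp (lpt d m x y \<tau>)) has_vector_derivative
     Db (Ag K d m) ** MBp (lpt d m x y t) + MBp (lpt d m x y t) ** Db (Ag K d m)) (at t)"
  using bounded_linear.has_vector_derivative[OF bl_Mb M_line[OF assms]]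
  by (simp add: MBp_def Mb_Db)

lemma ag_lemma: "((a::'a::ab_group_add) - b) + (a - c) = a + a - b - c"
  by (simp add: algebra_simps)

lemma GB_line:
  assumes "1 \<le> m" and U: "Ugood (lpt d m x y t)"
  shows "((\<lambda>\<tau>. GBp (lpt d m x y \<tau>)) has_vector_derivative
     (let G = GBp (lpt d m x y t); D = Db (Ag K d m) in G ** D ** G + G ** D ** G - G ** D - D ** G)) (at t)"
proof -
  let ?P = "lpt d m x y t"
  let ?G = "GBp ?P" and ?D = "Db (Ag K d m)" and ?Mb = "MBp ?P"
  let ?N = "mat 1 - ?Mb"
  have inv: "invertible ?N" using N_inv U by (simp add: Ugood_def MBp_def)
  have NG: "?N ** ?G = mat 1" "?G ** ?N = mat 1"
    using NG2 U by (simp_all add: Ugood_def MBp_def GBp_def)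
  have Gi: "matrix_inv ?N = ?G" by (simp add: GBp_def Gm_def MBp_def)
  have eqf: "(\<lambda>\<tau>. GBp (lpt d m x y \<tau>)) = (\<lambda>\<tau>. matrix_inv (mat 1 - MBp (lpt d m x y \<tau>)))"
    by (simp add: GBp_def Gm_def MBp_def fun_eq_iff)
  have hN: "((\<lambda>\<tau>. mat 1 - MBp (lpt d m x y \<tau>)) has_vector_derivative
      0 - (?D ** ?Mb + ?Mb ** ?D)) (at t)"
    by (rule has_vector_derivative_diff[OF has_vector_derivative_const MB_line[OF assms(1)]])
  have h: "((\<lambda>\<tau>. GBp (lpt d m x y \<tau>)) has_vector_derivative
      - (?G ** (0 - (?D ** ?Mb + ?Mb ** ?D)) ** ?G)) (at t)"
    using hvd_minv[OF hN inv] unfolding eqf Gi .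
  have a: "?Mb ** ?G = ?G - mat 1"
  proof -
    have "?N ** ?G = ?G - ?Mb ** ?G" by (simp only: mm_diff_rdistrib matrix_mul_lid)
    then show ?thesis using NG(1) by (simp add: algebra_simps)
  qed
  have b: "?G ** ?Mb = ?G - mat 1"
  proof -
    have "?G ** ?N = ?G - ?G ** ?Mb" by (simp only: mm_diff_ldistrib matrix_mul_rid)
    then show ?thesis using NG(2) by (simp add: algebra_simps)
  qed
  have "- (?G ** (0 - (?D ** ?Mb + ?Mb ** ?D)) ** ?G) = ?G ** (?D ** ?Mb + ?Mb ** ?D) ** ?G"
    by (simp only: diff_0 mm_uminus_left mm_uminus_right minus_minus)
  also have "\<dots> = ?G ** ?D ** (?Mb ** ?G) + (?G ** ?Mb) ** ?D ** ?G"
    by (simp only: matrix_add_ldistrib mm_add_rdistrib matrix_mul_assoc)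
  also have "\<dots> = (?G ** ?D ** ?G - ?G ** ?D) + (?G ** ?D ** ?G - ?D ** ?G)"
    unfolding a b by (simp only: mm_diff_ldistrib mm_diff_rdistrib matrix_mul_rid matrix_mul_lid)
  also have "\<dots> = ?G ** ?D ** ?G + ?G ** ?D ** ?G - ?G ** ?D - ?D ** ?G"
    by (rule ag_lemma)
  finally show ?thesis using h by (simp only: Let_def)
qed

lemma J_line:
  assumes "1 \<le> m" and U: "Ugood (lpt d m x y t)"
  shows "((\<lambda>\<tau>. JBp (lpt d m x y \<tau>)) has_vector_derivative
     (let S = SBp (lpt d m x y t); G = GBp (lpt d m x y t); R = RBp (lpt d m x y t); D = Db (Ag K d m)
      in S ** G ** D ** G ** Kbi K ** R + S ** G ** D ** G ** Kbi K ** R)) (at t)"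
proof -
  let ?P = "lpt d m x y t"
  let ?S = "SBp ?P" and ?G = "GBp ?P" and ?R = "RBp ?P" and ?D = "Db (Ag K d m)"
  have DK: "?D ** Kbi K = Kbi K ** ?D"
    by (rule Db_Kbi[OF Ag_comm_inv[OF K_inv] Ag_comm[OF K_inv]])
  have h: "((\<lambda>\<tau>. SBp (lpt d m x y \<tau>) ** GBp (lpt d m x y \<tau>) ** Kbi K ** RBp (lpt d m x y \<tau>)) has_vector_derivative
     ((?S ** ?D) ** ?G ** Kbi K ** ?R + ?S ** (?G ** ?D ** ?G + ?G ** ?D ** ?G - ?G ** ?D - ?D ** ?G) ** Kbi K ** ?R
      + ?S ** ?G ** Kbi K ** (?D ** ?R))) (at t)"
    by (rule hvd_SGCR[OF SB_line[OF assms(1)] GB_line[OF assms, unfolded Let_def] RB_line[OF assms(1)]])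
  have e: "?S ** ?G ** Kbi K ** (?D ** ?R) = ?S ** ?G ** ?D ** Kbi K ** ?R"
  proof -
    have "?S ** ?G ** Kbi K ** (?D ** ?R) = ?S ** ?G ** (Kbi K ** ?D) ** ?R"
      by (simp add: matrix_mul_assoc)
    also have "\<dots> = ?S ** ?G ** (?D ** Kbi K) ** ?R" by (simp add: DK)
    also have "\<dots> = ?S ** ?G ** ?D ** Kbi K ** ?R" by (simp add: matrix_mul_assoc)
    finally show ?thesis .
  qed
  have "((\<lambda>\<tau>. mat 1 + (SBp (lpt d m x y \<tau>) ** GBp (lpt d m x y \<tau>) ** Kbi K ** RBp (lpt d m x y \<tau>))) has_vector_derivative
     (?S ** ?G ** ?D ** ?G ** Kbi K ** ?R + ?S ** ?G ** ?D ** ?G ** Kbi K ** ?R)) (at t)"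
    using has_vector_derivative_add[OF has_vector_derivative_const h] unfolding e
    by (rule hvd_eq) (simp only: mm_add_rdistrib mm_diff_rdistrib matrix_add_ldistrib mm_diff_ldistrib
        matrix_mul_assoc, simp add: algebra_simps)
  then show ?thesis by (simp add: JBp_def' Let_def)
qed

lemma U_open:
  assumes "1 \<le> m" and U: "Ugood (lpt d m x y t)"
  shows "\<exists>e>0. \<forall>\<tau>. dist t \<tau> < e \<longrightarrow> Ugood (lpt d m x y \<tau>)"
proof -
  let ?M = "\<lambda>\<tau>. case_prod M (lpt d m x y \<tau>)"
  have hM: "?M differentiable (at t)" using M_line[OF assms(1)] differentiableI_vector by blast
  have "(\<lambda>\<tau>. mat 1 - mconj (?M \<tau>) ** ?M \<tau>) differentiable (at t)"
  proof -
    have hM': "(?M has_vector_derivative (Ag K d m ** ?M t + ?M t ** mconj (Ag K d m))) (at t)"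
      by (rule M_line[OF assms(1)])
    have "((\<lambda>\<tau>. mat 1 - mconj (?M \<tau>) ** ?M \<tau>) has_vector_derivative
        0 - (mconj (?M t) ** (Ag K d m ** ?M t + ?M t ** mconj (Ag K d m))
             + mconj (Ag K d m ** ?M t + ?M t ** mconj (Ag K d m)) ** ?M t)) (at t)"
      by (rule has_vector_derivative_diff[OF has_vector_derivative_const hvd_mm[OF hvd_mconj[OF hM'] hM']])
    then show ?thesis using differentiableI_vector by blast
  qed
  then have "continuous (at t) (\<lambda>\<tau>. mat 1 - mconj (?M \<tau>) ** ?M \<tau>)"
    using differentiable_imp_continuous_within by blast
  from invertible_near[OF this] U show ?thesis by (simp add: Ugood_def)
qed

end


definition Kz :: "complex^'n^'n \<Rightarrow> nat \<Rightarrow> complex^('n+'n)^('n+'n)" where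
  "Kz K m = msmult (1/2) (Db (Axi K m) - msmult \<i> (Db (Aeta K m)))"
definition Kzb :: "complex^'n^'n \<Rightarrow> nat \<Rightarrow> complex^('n+'n)^('n+'n)" where
  "Kzb K m = msmult (1/2) (Db (Axi K m) + msmult \<i> (Db (Aeta K m)))"

lemma cnj_sign[simp]: "cnj ((-1::complex)^k) = (-1)^k"
  by simp

lemma mconj_Axi: "mconj (Axi K m) = mpow (mconj K) m + msmult ((-1)^(m+1)) (mpow (mconj (matrix_inv K)) m)"
  by (simp only: Axi_def mconj_add mconj_msmult mconj_mpow cnj_sign)

lemma mconj_Aeta: "mconj (Aeta K m) = msmult (- \<i>) (mpow (mconj K) m - msmult ((-1)^(m+1)) (mpow (mconj (matrix_inv K)) m))"
  by (simp only: Aeta_def mconj_diff mconj_msmult mconj_mpow cnj_sign complex_cnj_i)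

lemma Kz_blk: "Kz K m = blk (mpow K m) 0 0 (msmult ((-1)^(m+1)) (mpow (mconj (matrix_inv K)) m))"
proof -
  have "Kz K m $ i $ j = blk (mpow K m) 0 0 (msmult ((-1)^(m+1)) (mpow (mconj (matrix_inv K)) m)) $ i $ j" for i j
    unfolding Kz_def Db_def mconj_Axi mconj_Aeta
    by (cases i; cases j) (simp_all add: Axi_def Aeta_def msmult_def field_simps)
  then show ?thesis by (simp add: vec_eq_iff)
qed

lemma Kzb_blk: "Kzb K m = blk (msmult ((-1)^(m+1)) (mpow (matrix_inv K) m)) 0 0 (mpow (mconj K) m)"
proof -
  have "Kzb K m $ i $ j = blk (msmult ((-1)^(m+1)) (mpow (matrix_inv K) m)) 0 0 (mpow (mconj K) m) $ i $ j" for i j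
    unfolding Kzb_def Db_def mconj_Axi mconj_Aeta
    by (cases i; cases j) (simp_all add: Axi_def Aeta_def msmult_def field_simps)
  then show ?thesis by (simp add: vec_eq_iff)
qed

lemma msmult_neg: "msmult (- c) A = - msmult c A"
  by (simp add: msmult_def vec_eq_iff)

lemma mpow_Suc_right: "mpow (A::complex^'n^'n) (Suc n) = mpow A n ** A"
  by (simp add: mpow_Suc mpow_comm)

lemma Kz_rel:
  fixes K :: "complex^'n^'n"
  assumes "invertible K"
  shows "Kz K (Suc n) ** Kbi K = Kz K n"
proof -
  have a: "mpow K (Suc n) ** matrix_inv K = mpow K n"
    using minv_right[OF assms] by (simp add: mpow_Suc_right matrix_mul_assoc[symmetric])
  have "mconj (matrix_inv K) ** mconj K = mat 1"
    using minv_left[OF assms] by (simp add: mconj_mult[symmetric])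
  then have b: "mpow (mconj (matrix_inv K)) (Suc n) ** mconj K = mpow (mconj (matrix_inv K)) n"
    by (simp add: mpow_Suc_right matrix_mul_assoc[symmetric])
  have c: "- ((-1::complex)^(Suc n + 1)) = (-1)^(n+1)" by simp
  show ?thesis
    by (simp add: Kz_blk Kbi_def blk_mult mm_uminus_right msmult_mult_left[symmetric] a b
        msmult_neg)
qed

lemma Kzb_rel:
  fixes K :: "complex^'n^'n"
  assumes "invertible K"
  shows "Kzb K n ** Kbi K = - Kzb K (Suc n)"
proof -
  have a: "mpow (matrix_inv K) n ** matrix_inv K = mpow (matrix_inv K) (Suc n)"
    by (simp add: mpow_Suc_right)
  have b: "mpow (mconj K) n ** mconj K = mpow (mconj K) (Suc n)"
    by (simp add: mpow_Suc_right)
  have c: "((-1::complex)^(Suc n + 1)) = - ((-1)^(n+1))" by simp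
  show ?thesis
    by (simp add: Kzb_blk Kbi_def blk_mult blk_uminus mm_uminus_right mm_uminus_left msmult_mult_left[symmetric] a b c
        msmult_neg)
qed


lemma clin_comb:
  fixes F :: "complex^'n^'m \<Rightarrow> complex^'p^'q"
  assumes add: "\<And>X Y. F (X + Y) = F X + F Y" and sm: "\<And>c X. F (msmult c X) = msmult c (F X)"
  shows "F (msmult (1/2) (D1 - msmult \<i> D2)) = msmult (1/2) (F D1 - msmult \<i> (F D2))"
    and "F (msmult (1/2) (D1 + msmult \<i> D2)) = msmult (1/2) (F D1 + msmult \<i> (F D2))"
proof -
  have diff: "F (X - Y) = F X - F Y" for X Y
    using add[of "X - Y" Y] by (simp add: eq_diff_eq)
  show "F (msmult (1/2) (D1 - msmult \<i> D2)) = msmult (1/2) (F D1 - msmult \<i> (F D2))"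
    by (simp add: sm diff)
  show "F (msmult (1/2) (D1 + msmult \<i> D2)) = msmult (1/2) (F D1 + msmult \<i> (F D2))"
    by (simp add: sm add)
qed

context sdl
begin

definition "vfun = (\<lambda>xi eta. vmat K (r xi eta) (s xi eta) (M xi eta))"
definition "JD p D = SBp p ** GBp p ** D ** GBp p ** Kbi K ** RBp p"
definition "E2 p C = SBp p ** GBp p ** C ** GBp p ** RBp p"
definition "E2d p C D = (let S = SBp p; G = GBp p; R = RBp p in
   S ** G ** D ** G ** C ** G ** R + S ** G ** D ** G ** C ** G ** R
 + S ** G ** C ** G ** D ** G ** R + S ** G ** C ** G ** D ** G ** R
 - S ** G ** D ** C ** G ** R - S ** G ** C ** D ** G ** R)"

lemma v_pt:
  assumes "Ugood p" shows "case_prod vfun p = gam ** JBp p ** gam"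
  using pt.v_eq[OF pt_at[OF assms]] by (cases p) (simp add: vfun_def JBp_def)

lemma vinv_pt: "Ugood p \<Longrightarrow> matrix_inv (case_prod vfun p) = gam ** (mat 1 - Ym K (case_prod r p) (case_prod s p) (case_prod M p)) ** gam"
proof -
  assume U: "Ugood p"
  have "case_prod vfun p ** (gam ** (mat 1 - Ym K (case_prod r p) (case_prod s p) (case_prod M p)) ** gam) = mat 1"
  proof -
    let ?J = "JBp p" and ?Y = "Ym K (case_prod r p) (case_prod s p) (case_prod M p)"
    have JY: "?J ** (mat 1 - ?Y) = mat 1" using pt.J_facts(1)[OF pt_at[OF U]] by (simp add: JBp_def)
    have "gam ** ?J ** gam ** (gam ** (mat 1 - ?Y) ** gam) = gam ** ?J ** (gam ** gam) ** (mat 1 - ?Y) ** gam"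
      by (simp add: matrix_mul_assoc)
    also have "\<dots> = gam ** (?J ** (mat 1 - ?Y)) ** gam" by (simp add: gam_gam matrix_mul_assoc)
    also have "\<dots> = mat 1" by (simp add: JY gam_gam)
    finally show ?thesis unfolding v_pt[OF U] .
  qed
  then show ?thesis by (rule minv_unique)
qed

lemma v_line:
  assumes m: "1 \<le> m" and U: "Ugood (lpt d m x y t)"
  shows "((\<lambda>\<tau>. case_prod vfun (lpt d m x y \<tau>)) has_vector_derivative
     gam ** (JD (lpt d m x y t) (Db (Ag K d m)) + JD (lpt d m x y t) (Db (Ag K d m))) ** gam) (at t)"
proof -
  let ?P = "lpt d m x y t"
  have hJ: "((\<lambda>\<tau>. JBp (lpt d m x y \<tau>)) has_vector_derivative
      (JD ?P (Db (Ag K d m)) + JD ?P (Db (Ag K d m)))) (at t)"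
    using J_line[OF m U] by (simp add: JD_def Let_def)
  have h: "((\<lambda>\<tau>. gam ** JBp (lpt d m x y \<tau>) ** gam) has_vector_derivative
      gam ** (JD ?P (Db (Ag K d m)) + JD ?P (Db (Ag K d m))) ** gam) (at t)"
    using hvd_mm[OF hvd_mm[OF has_vector_derivative_const hJ] has_vector_derivative_const]
    by simp
  obtain e where e: "e > 0" "\<And>\<tau>. dist t \<tau> < e \<Longrightarrow> Ugood (lpt d m x y \<tau>)"
    using U_open[OF m U] by blast
  show ?thesis
  proof (rule has_vector_derivative_transform_within[OF h e(1)])
    show "t \<in> UNIV" by simp
    fix \<tau> assume "\<tau> \<in> UNIV" "dist \<tau> t < e"
    then show "gam ** JBp (lpt d m x y \<tau>) ** gam = case_prod vfun (lpt d m x y \<tau>)"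
      using e(2) v_pt by (metis dist_commute)
  qed
qed

lemma line_xi: "(\<lambda>t. F (x(m:=t)) y) = (\<lambda>\<tau>. case_prod F (lpt True m x y \<tau>))"
  by (simp add: lpt_def)

lemma line_eta: "(\<lambda>t. F x (y(m:=t))) = (\<lambda>\<tau>. case_prod F (lpt False m x y \<tau>))"
  by (simp add: lpt_def)

lemma lpt_b: "lpt True m x y (x m) = (x, y)" "lpt False m x y (y m) = (x, y)"
  by (simp_all add: lpt_def)

lemma JD_add: "JD p (X + Y) = JD p X + JD p Y"
  by (simp add: JD_def matrix_add_ldistrib mm_add_rdistrib)

lemma JD_sm: "JD p (msmult c X) = msmult c (JD p X)"
  by (simp add: JD_def msmult_mult_left[symmetric] msmult_mult_right[symmetric])

lemma vfun_derivs:
  assumes m: "1 \<le> m" and U: "Ugood (x, y)"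
  shows "dxi m vfun x y = gam ** (JD (x,y) (Db (Axi K m)) + JD (x,y) (Db (Axi K m))) ** gam"
    and "deta m vfun x y = gam ** (JD (x,y) (Db (Aeta K m)) + JD (x,y) (Db (Aeta K m))) ** gam"
    and "pdiff m vfun x y"
proof -
  have h1: "((\<lambda>t. vfun (x(m:=t)) y) has_vector_derivative
      gam ** (JD (x,y) (Db (Axi K m)) + JD (x,y) (Db (Axi K m))) ** gam) (at (x m))"
    using v_line[OF m, of True x y "x m"] U by (simp add: lpt_def Ag_def)
  have h2: "((\<lambda>t. vfun x (y(m:=t))) has_vector_derivative
      gam ** (JD (x,y) (Db (Aeta K m)) + JD (x,y) (Db (Aeta K m))) ** gam) (at (y m))"
    using v_line[OF m, of False x y "y m"] U by (simp add: lpt_def Ag_def)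
  show "dxi m vfun x y = gam ** (JD (x,y) (Db (Axi K m)) + JD (x,y) (Db (Axi K m))) ** gam"
    unfolding dxi_def by (rule vector_derivative_at[OF h1])
  show "deta m vfun x y = gam ** (JD (x,y) (Db (Aeta K m)) + JD (x,y) (Db (Aeta K m))) ** gam"
    unfolding deta_def by (rule vector_derivative_at[OF h2])
  show "pdiff m vfun x y"
    unfolding pdiff_def using h1 h2 differentiableI_vector by blast
qed

lemma vfun_dz:
  assumes m: "1 \<le> m" and U: "Ugood (x, y)"
  shows "dz m vfun x y = gam ** (JD (x,y) (Kz K m) + JD (x,y) (Kz K m)) ** gam"
    and "dzb m vfun x y = gam ** (JD (x,y) (Kzb K m) + JD (x,y) (Kzb K m)) ** gam"
proof -
  let ?F = "\<lambda>D. gam ** (JD (x,y) D + JD (x,y) D) ** gam"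
  have add: "?F (X + Y) = ?F X + ?F Y" for X Y
    by (simp add: JD_add matrix_add_ldistrib mm_add_rdistrib add_ac)
  have sm: "?F (msmult c X) = msmult c (?F X)" for c X
    by (simp add: JD_sm msmult_add[symmetric] msmult_mult_left[symmetric] msmult_mult_right[symmetric])
  show "dz m vfun x y = ?F (Kz K m)"
    unfolding dz_def vfun_derivs[OF m U] Kz_def clin_comb(1)[of ?F, OF add sm] ..
  show "dzb m vfun x y = ?F (Kzb K m)"
    unfolding dzb_def vfun_derivs[OF m U] Kzb_def clin_comb(2)[of ?F, OF add sm] ..
qed

lemma Phi_gen:
  assumes U: "Ugood p"
  shows "gam ** (JD p D + JD p D) ** gam ** matrix_inv (case_prod vfun p)
     = gam ** (E2 p (D ** Kbi K) + E2 p (D ** Kbi K)) ** gam"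
proof -
  let ?Y = "Ym K (case_prod r p) (case_prod s p) (case_prod M p)"
  have Z: "GBp p ** Kbi K ** RBp p ** (mat 1 - ?Y) = Kbi K ** GBp p ** RBp p"
    using pt.J_facts(2)[OF pt_at[OF U]] by (simp add: GBp_def RBp_def)
  have e: "JD p D ** (mat 1 - ?Y) = E2 p (D ** Kbi K)"
  proof -
    have "JD p D ** (mat 1 - ?Y) = SBp p ** GBp p ** D ** (GBp p ** Kbi K ** RBp p ** (mat 1 - ?Y))"
      by (simp add: JD_def matrix_mul_assoc)
    also have "\<dots> = E2 p (D ** Kbi K)" unfolding Z by (simp add: E2_def matrix_mul_assoc)
    finally show ?thesis .
  qed
  have "gam ** (JD p D + JD p D) ** gam ** matrix_inv (case_prod vfun p)
      = gam ** (JD p D + JD p D) ** (gam ** gam) ** (mat 1 - ?Y) ** gam"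
    unfolding vinv_pt[OF U] by (simp only: matrix_mul_assoc)
  also have "\<dots> = gam ** (JD p D ** (mat 1 - ?Y) + JD p D ** (mat 1 - ?Y)) ** gam"
    by (simp only: gam_gam matrix_mul_rid matrix_add_ldistrib mm_add_rdistrib matrix_mul_assoc)
  also have "\<dots> = gam ** (E2 p (D ** Kbi K) + E2 p (D ** Kbi K)) ** gam" unfolding e ..
  finally show ?thesis .
qed

lemma E2_line:
  assumes m: "1 \<le> m" and U: "Ugood (lpt d m x y t)"
  shows "((\<lambda>\<tau>. E2 (lpt d m x y \<tau>) C) has_vector_derivative
     E2d (lpt d m x y t) C (Db (Ag K d m))) (at t)"
proof -
  let ?P = "lpt d m x y t"
  let ?S = "SBp ?P" and ?G = "GBp ?P" and ?R = "RBp ?P" and ?D = "Db (Ag K d m)"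
  have h: "((\<lambda>\<tau>. SBp (lpt d m x y \<tau>) ** GBp (lpt d m x y \<tau>) ** C ** GBp (lpt d m x y \<tau>) ** RBp (lpt d m x y \<tau>))
     has_vector_derivative
      ((?S ** ?D) ** ?G ** C ** ?G ** ?R + ?S ** (?G ** ?D ** ?G + ?G ** ?D ** ?G - ?G ** ?D - ?D ** ?G) ** C ** ?G ** ?R
       + ?S ** ?G ** C ** (?G ** ?D ** ?G + ?G ** ?D ** ?G - ?G ** ?D - ?D ** ?G) ** ?R
       + ?S ** ?G ** C ** ?G ** (?D ** ?R))) (at t)"
    by (rule hvd_SGCGR[OF SB_line[OF m] GB_line[OF m U, unfolded Let_def] RB_line[OF m]])
  show ?thesis unfolding E2_def
    by (rule hvd_eq[OF h], unfold E2d_def Let_def,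
        simp only: mm_add_rdistrib mm_diff_rdistrib matrix_add_ldistrib mm_diff_ldistrib matrix_mul_assoc,
        simp add: algebra_simps)
qed

lemma E2d_add: "E2d p C (X + Y) = E2d p C X + E2d p C Y"
  unfolding E2d_def Let_def
  by (simp only: mm_add_rdistrib mm_diff_rdistrib matrix_add_ldistrib mm_diff_ldistrib matrix_mul_assoc,
      simp add: algebra_simps)

lemma E2d_sm: "E2d p C (msmult c X) = msmult c (E2d p C X)"
  unfolding E2d_def Let_def
  by (simp only: msmult_mult_left[symmetric] msmult_mult_right[symmetric] msmult_add[symmetric]
      msmult_diff[symmetric])

lemma E2d_anti: "E2d p (- B) A = - E2d p A B"
  unfolding E2d_def Let_def
  by (simp only: mm_uminus_left mm_uminus_right mm_add_rdistrib mm_diff_rdistrib matrix_add_ldistrib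
      mm_diff_ldistrib matrix_mul_assoc, simp add: algebra_simps)

lemma Phi_line:
  assumes m: "1 \<le> m" and m': "1 \<le> m'" and U: "Ugood (lpt d m' x y t)"
  shows "((\<lambda>\<tau>. case_prod (\<lambda>a b. dz m vfun a b ** matrix_inv (vfun a b)) (lpt d m' x y \<tau>))
     has_vector_derivative gam ** (E2d (lpt d m' x y t) (Kz K m ** Kbi K) (Db (Ag K d m'))
                                  + E2d (lpt d m' x y t) (Kz K m ** Kbi K) (Db (Ag K d m'))) ** gam) (at t)"
proof -
  let ?C = "Kz K m ** Kbi K"
  let ?E = "\<lambda>\<tau>. E2 (lpt d m' x y \<tau>) ?C"
  let ?Ed = "E2d (lpt d m' x y t) ?C (Db (Ag K d m'))"
  have hE: "((\<lambda>\<tau>. ?E \<tau> + ?E \<tau>) has_vector_derivative ?Ed + ?Ed) (at t)"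
    by (rule has_vector_derivative_add[OF E2_line[OF m' U] E2_line[OF m' U]])
  have h: "((\<lambda>\<tau>. gam ** (?E \<tau> + ?E \<tau>) ** gam) has_vector_derivative gam ** (?Ed + ?Ed) ** gam) (at t)"
    using hvd_mm[OF hvd_mm[OF has_vector_derivative_const hE] has_vector_derivative_const]
    by (simp only: times0_left times0_right add_0_left add_0_right)
  obtain e where e: "e > 0" "\<And>\<tau>. dist t \<tau> < e \<Longrightarrow> Ugood (lpt d m' x y \<tau>)"
    using U_open[OF m' U] by blast
  show ?thesis
  proof (rule has_vector_derivative_transform_within[OF h e(1)])
    show "t \<in> UNIV" by simp
    fix \<tau> assume "\<tau> \<in> UNIV" "dist \<tau> t < e"
    then have U': "Ugood (lpt d m' x y \<tau>)" using e(2) by (metis dist_commute)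
    obtain a b where ab: "lpt d m' x y \<tau> = (a, b)" by (cases "lpt d m' x y \<tau>")
    have "dz m vfun a b ** matrix_inv (vfun a b) = gam ** (?E \<tau> + ?E \<tau>) ** gam"
      using Phi_gen[OF U'] vfun_dz(1)[OF m, of a b] U' unfolding ab by simp
    then show "gam ** (?E \<tau> + ?E \<tau>) ** gam =
       case_prod (\<lambda>a b. dz m vfun a b ** matrix_inv (vfun a b)) (lpt d m' x y \<tau>)"
      unfolding ab by simp
  qed
qed

lemma Psi_line:
  assumes m: "1 \<le> m" and m': "1 \<le> m'" and U: "Ugood (lpt d m' x y t)"
  shows "((\<lambda>\<tau>. case_prod (\<lambda>a b. dzb m vfun a b ** matrix_inv (vfun a b)) (lpt d m' x y \<tau>))
     has_vector_derivative gam ** (E2d (lpt d m' x y t) (Kzb K m ** Kbi K) (Db (Ag K d m'))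
                                  + E2d (lpt d m' x y t) (Kzb K m ** Kbi K) (Db (Ag K d m'))) ** gam) (at t)"
proof -
  let ?C = "Kzb K m ** Kbi K"
  let ?E = "\<lambda>\<tau>. E2 (lpt d m' x y \<tau>) ?C"
  let ?Ed = "E2d (lpt d m' x y t) ?C (Db (Ag K d m'))"
  have hE: "((\<lambda>\<tau>. ?E \<tau> + ?E \<tau>) has_vector_derivative ?Ed + ?Ed) (at t)"
    by (rule has_vector_derivative_add[OF E2_line[OF m' U] E2_line[OF m' U]])
  have h: "((\<lambda>\<tau>. gam ** (?E \<tau> + ?E \<tau>) ** gam) has_vector_derivative gam ** (?Ed + ?Ed) ** gam) (at t)"
    using hvd_mm[OF hvd_mm[OF has_vector_derivative_const hE] has_vector_derivative_const]
    by (simp only: times0_left times0_right add_0_left add_0_right)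
  obtain e where e: "e > 0" "\<And>\<tau>. dist t \<tau> < e \<Longrightarrow> Ugood (lpt d m' x y \<tau>)"
    using U_open[OF m' U] by blast
  show ?thesis
  proof (rule has_vector_derivative_transform_within[OF h e(1)])
    show "t \<in> UNIV" by simp
    fix \<tau> assume "\<tau> \<in> UNIV" "dist \<tau> t < e"
    then have U': "Ugood (lpt d m' x y \<tau>)" using e(2) by (metis dist_commute)
    obtain a b where ab: "lpt d m' x y \<tau> = (a, b)" by (cases "lpt d m' x y \<tau>")
    have "dzb m vfun a b ** matrix_inv (vfun a b) = gam ** (?E \<tau> + ?E \<tau>) ** gam"
      using Phi_gen[OF U'] vfun_dz(2)[OF m, of a b] U' unfolding ab by simp
    then show "gam ** (?E \<tau> + ?E \<tau>) ** gam =
       case_prod (\<lambda>a b. dzb m vfun a b ** matrix_inv (vfun a b)) (lpt d m' x y \<tau>)"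
      unfolding ab by simp
  qed
qed

lemma second_derivs:
  assumes n: "1 \<le> n" and U: "Ugood (x, y)"
  shows "pdiff (n+1) (\<lambda>a b. dz (n+1) vfun a b ** matrix_inv (vfun a b)) x y"
    and "pdiff n (\<lambda>a b. dzb n vfun a b ** matrix_inv (vfun a b)) x y"
    and "dzb (n+1) (\<lambda>a b. dz (n+1) vfun a b ** matrix_inv (vfun a b)) x y
         + dz n (\<lambda>a b. dzb n vfun a b ** matrix_inv (vfun a b)) x y = 0"
proof -
  have n1: "1 \<le> n + 1" by simp
  let ?p = "(x, y)"
  let ?Phi = "\<lambda>a b. dz (n+1) vfun a b ** matrix_inv (vfun a b)"
  let ?Psi = "\<lambda>a b. dzb n vfun a b ** matrix_inv (vfun a b)"
  let ?C1 = "Kz K (n+1) ** Kbi K" and ?C2 = "Kzb K n ** Kbi K"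
  let ?H1 = "\<lambda>D. gam ** (E2d ?p ?C1 D + E2d ?p ?C1 D) ** gam"
  let ?H2 = "\<lambda>D. gam ** (E2d ?p ?C2 D + E2d ?p ?C2 D) ** gam"
  have U1: "Ugood (lpt True (n+1) x y (x (n+1)))" "Ugood (lpt False (n+1) x y (y (n+1)))"
    "Ugood (lpt True n x y (x n))" "Ugood (lpt False n x y (y n))"
    using U by (simp_all add: lpt_b)
  have a1: "((\<lambda>t. ?Phi (x(n+1:=t)) y) has_vector_derivative ?H1 (Db (Axi K (n+1)))) (at (x (n+1)))"
    using Phi_line[OF n1 n1 U1(1)] by (simp add: lpt_def Ag_def)
  have a2: "((\<lambda>t. ?Phi x (y(n+1:=t))) has_vector_derivative ?H1 (Db (Aeta K (n+1)))) (at (y (n+1)))"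
    using Phi_line[OF n1 n1 U1(2)] by (simp add: lpt_def Ag_def)
  have b1: "((\<lambda>t. ?Psi (x(n:=t)) y) has_vector_derivative ?H2 (Db (Axi K n))) (at (x n))"
    using Psi_line[OF n n U1(3)] by (simp add: lpt_def Ag_def)
  have b2: "((\<lambda>t. ?Psi x (y(n:=t))) has_vector_derivative ?H2 (Db (Aeta K n))) (at (y n))"
    using Psi_line[OF n n U1(4)] by (simp add: lpt_def Ag_def)
  show "pdiff (n+1) ?Phi x y" unfolding pdiff_def using a1 a2 differentiableI_vector by blast
  show "pdiff n ?Psi x y" unfolding pdiff_def using b1 b2 differentiableI_vector by blast
  have add1: "?H1 (X + Y) = ?H1 X + ?H1 Y" for X Y
    by (simp only: E2d_add matrix_add_ldistrib mm_add_rdistrib add_ac)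
  have sm1: "?H1 (msmult c X) = msmult c (?H1 X)" for c X
    by (simp only: E2d_sm msmult_add[symmetric] msmult_mult_left[symmetric] msmult_mult_right[symmetric])
  have add2: "?H2 (X + Y) = ?H2 X + ?H2 Y" for X Y
    by (simp only: E2d_add matrix_add_ldistrib mm_add_rdistrib add_ac)
  have sm2: "?H2 (msmult c X) = msmult c (?H2 X)" for c X
    by (simp only: E2d_sm msmult_add[symmetric] msmult_mult_left[symmetric] msmult_mult_right[symmetric])
  have e1: "dzb (n+1) ?Phi x y = ?H1 (Kzb K (n+1))"
    unfolding dzb_def dxi_def deta_def vector_derivative_at[OF a1] vector_derivative_at[OF a2]
      Kzb_def clin_comb(2)[of ?H1, OF add1 sm1] ..
  have e2: "dz n ?Psi x y = ?H2 (Kz K n)"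
    unfolding dz_def dxi_def deta_def vector_derivative_at[OF b1] vector_derivative_at[OF b2]
      Kz_def clin_comb(1)[of ?H2, OF add2 sm2] ..
  have C1: "?C1 = Kz K n" using Kz_rel[OF K_inv, of n] by simp
  have C2: "?C2 = - Kzb K (n+1)" using Kzb_rel[OF K_inv, of n] by simp
  let ?X = "E2d ?p (Kz K n) (Kzb K (n+1))"
  have "dzb (n+1) ?Phi x y + dz n ?Psi x y
      = gam ** (?X + ?X) ** gam + gam ** (- ?X + - ?X) ** gam"
    unfolding e1 e2 C1 C2 E2d_anti ..
  also have "\<dots> = 0"
    by (simp only: minus_add_distrib[symmetric] mm_uminus_left mm_uminus_right right_minus)
  finally show "dzb (n+1) ?Phi x y + dz n ?Psi x y = 0" .
qed

end


theorem theorem3: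
  fixes K :: "complex^'n^'n"
    and r s :: "(nat \<Rightarrow> real) \<Rightarrow> (nat \<Rightarrow> real) \<Rightarrow> complex^'n"
    and M :: "(nat \<Rightarrow> real) \<Rightarrow> (nat \<Rightarrow> real) \<Rightarrow> complex^'n^'n"
  assumes K_inv: "invertible K"
    and K_spec: "\<not> (\<exists>\<mu>. is_eigenvalue K \<mu> \<and> is_eigenvalue (- matrix_inv (mconj K)) \<mu>)"
    and M_eq: "\<And>xi eta. K ** M xi eta + M xi eta ** matrix_inv (mconj K)
                 = - (outer (r xi eta) (vconj (s xi eta)) ** matrix_inv (mconj K))"
    and r_xi: "\<And>n xi eta. n \<ge> 1 \<Longrightarrow>
       ((\<lambda>t. r (xi(n := t)) eta) has_vector_derivative
          ((mpow K n + msmult ((-1)^(n+1)) (mpow (matrix_inv K) n)) *v r xi eta)) (at (xi n))"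
    and r_eta: "\<And>n xi eta. n \<ge> 1 \<Longrightarrow>
       ((\<lambda>t. r xi (eta(n := t))) has_vector_derivative
          (msmult \<i> (mpow K n - msmult ((-1)^(n+1)) (mpow (matrix_inv K) n)) *v r xi eta)) (at (eta n))"
    and s_xi: "\<And>n xi eta. n \<ge> 1 \<Longrightarrow>
       ((\<lambda>t. s (xi(n := t)) eta) has_vector_derivative
          ((mpow (transpose K) n + msmult ((-1)^(n+1)) (mpow (matrix_inv (transpose K)) n))
             *v s xi eta)) (at (xi n))"
    and s_eta: "\<And>n xi eta. n \<ge> 1 \<Longrightarrow>
       ((\<lambda>t. s xi (eta(n := t))) has_vector_derivative
          (msmult \<i> (mpow (transpose K) n - msmult ((-1)^(n+1)) (mpow (matrix_inv (transpose K)) n))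
             *v s xi eta)) (at (eta n))"
    and v_def: "v = (\<lambda>xi eta. vmat K (r xi eta) (s xi eta) (M xi eta))"
    and dom: "invertible (mat 1 - mconj (M xi eta) ** M xi eta)"
    and n_pos: "n \<ge> 1"
  shows "pdiff n v xi eta \<and> pdiff (n+1) v xi eta
       \<and> pdiff (n+1) (\<lambda>a b. dz (n+1) v a b ** matrix_inv (v a b)) xi eta
       \<and> pdiff n (\<lambda>a b. dzb n v a b ** matrix_inv (v a b)) xi eta
       \<and> dzb (n+1) (\<lambda>a b. dz (n+1) v a b ** matrix_inv (v a b)) xi eta
         + dz n (\<lambda>a b. dzb n v a b ** matrix_inv (v a b)) xi eta = 0
       \<and> adj (v xi eta) = v xi eta
       \<and> det (v xi eta) = 1
       \<and> (pos_def (v xi eta) \<or> neg_def (v xi eta))"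
proof -
  interpret sdl K r s M
    by (unfold_locales) (fact K_inv K_spec M_eq r_xi r_eta s_xi s_eta)+
  have U: "Ugood (xi, eta)" using dom by (simp add: Ugood_def)
  have vv: "v = vfun" by (simp add: v_def vfun_def)
  have n1: "1 \<le> n + 1" by simp
  have P: "pt K (M xi eta) (r xi eta) (s xi eta)" using pt_at[OF U] by simp
  have vx: "v xi eta = vmat K (r xi eta) (s xi eta) (M xi eta)" by (simp add: v_def)
  show ?thesis
    unfolding vv
    using vfun_derivs(3)[OF n_pos U] vfun_derivs(3)[OF n1 U] second_derivs[OF n_pos U]
      pt.adj_v[OF P] pt.det_v[OF P] pt.def_v[OF P]
    by (simp add: vfun_def)
qed


end
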